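(* Let $\mathbf A,\mathbf B$ be real $3\times3$ positive-definite symmetric matrices with $\mathbf B=\mathbf R\mathbf A\mathbf R^T$ for some $\mathbf R\in\mathrm O(3)$. If there are $\mathbf Q\in\mathrm{SO}(3)$ and $\mathbf a,\mathbf n\in\mathbb R^3$ with $\mathbf Q\mathbf B-\mathbf A=\mathbf a\otimes\mathbf n$, then there is a unit vector $\hat{\mathbf e}\in\mathbb R^3$ such that $$\mathbf B=(-\mathbf I+2\hat{\mathbf e}\otimes\hat{\mathbf e})\mathbf A(-\mathbf I+2\hat{\mathbf e}\otimes\hat{\mathbf e}).\qquad( * )$$ Conversely, if $\mathbf A,\mathbf B$ satisfy $( * )$ for some unit vector $\hat{\mathbf e}$, then there are $\mathbf Q\in\mathrm{SO}(3)$ and $\mathbf a,\mathbf n\in\mathbb R^3$ with $\mathbf Q\mathbf B-\mathbf A=\mathbf a\otimes\mathbf n$. Moreover, under these hypotheses there is an orthonormal basis $\{\mathbf e_1,\mathbf e_2,\mathbf e_3\}$ such that $$\mathbf A^{-1}\mathbf B^2\mathbf A^{-1}=\mu_1\mathbf e_1\otimes\mathbf e_1+\mathbf e_2\otimes\mathbf e_2+\mu_3\mathbf e_3\otimes\mathbf e_3,\quad 0<\mu_1\le1\le\mu_3,$$ and $$\mu_1\mu_3=1,\quad \mathbf e_1\cdot\mathbf A^2\mathbf e_1=\mu_3\,\mathbf e_3\cdot\mathbf A^2\mathbf e_3,\quad (\mathbf e_2\cdot\mathbf A^2\mathbf e_1)^2=\mu_3(\mathbf e_2\cdot\mathbf A^2\mathbf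 e_3)^2.$$ If $\mu_3>1$, all unit vectors $\hat{\mathbf e}$ satisfying $( * )$ are given by $$\hat{\mathbf e}=\pm(\delta_1\mathbf A\mathbf e_1+\delta_3\mathbf A\mathbf e_3),\quad \delta_1=\Big(2\big(\mathbf e_1\cdot\mathbf A^2\mathbf e_1+s\sqrt{\mu_3}\,\mathbf e_3\cdot\mathbf A^2\mathbf e_1\big)\Big)^{-1/2},\quad \delta_3=s\sqrt{\mu_3}\,\delta_1,$$ where $s\in\{\pm1\}$ satisfies $s\sqrt{\mu_3}(\mathbf e_2\cdot\mathbf A^2\mathbf e_3)=-\mathbf e_2\cdot\mathbf A^2\mathbf e_1$. If $\mu_3=1$, then necessarily $\mathbf B=\mathbf A$ and $\hat{\mathbf e}$ can be chosen as a normalized eigenvector of $\mathbf A$.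
   Context: $\mathbf a\otimes\mathbf n$ denotes the matrix $\mathbf x\mapsto(\mathbf n\cdot\mathbf x)\mathbf a$. $\mathrm O(3)$ is the orthogonal group and $\mathrm{SO}(3)$ the rotation group. *)

theory Defs
  imports "HOL-Analysis.Analysis"
begin

definition outer :: "real^3 \<Rightarrow> real^3 \<Rightarrow> real^3^3" where
  "outer a n = (\<chi> i j. a$i * n$j)"

definition sym_posdef :: "real^3^3 \<Rightarrow> bool" where
  "sym_posdef A \<longleftrightarrow> transpose A = A \<and> (\<forall>x. x \<noteq> 0 \<longrightarrow> x \<bullet> (A *v x) > 0)"

definition in_O3 :: "real^3^3 \<Rightarrow> bool" where
  "in_O3 R \<longleftrightarrow> orthogonal_matrix R"

definition in_SO3 :: "real^3^3 \<Rightarrow> bool" where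
  "in_SO3 Q \<longleftrightarrow> orthogonal_matrix Q \<and> det Q = 1"

definition refl_mat :: "real^3 \<Rightarrow> real^3^3" where
  "refl_mat e = - mat 1 + 2 *\<^sub>R outer e e"

definition orthonormal3 :: "real^3 \<Rightarrow> real^3 \<Rightarrow> real^3 \<Rightarrow> bool" where
  "orthonormal3 e1 e2 e3 \<longleftrightarrow>
     e1 \<bullet> e1 = 1 \<and> e2 \<bullet> e2 = 1 \<and> e3 \<bullet> e3 = 1 \<and>
     e1 \<bullet> e2 = 0 \<and> e1 \<bullet> e3 = 0 \<and> e2 \<bullet> e3 = 0"

definition rank_one_connected :: "real^3^3 \<Rightarrow> real^3^3 \<Rightarrow> bool" where
  "rank_one_connected A B \<longleftrightarrow> (\<exists>Q a n. in_SO3 Q \<and> Q ** B - A = outer a n)"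

definition star_cond :: "real^3^3 \<Rightarrow> real^3^3 \<Rightarrow> real^3 \<Rightarrow> bool" where
  "star_cond A B e \<longleftrightarrow> norm e = 1 \<and> B = refl_mat e ** A ** refl_mat e"

end

theory Submission
  imports Defs
begin

lemma outer_mv: "outer a n *v x = (n \<bullet> x) *\<^sub>R a"
  unfolding outer_def matrix_vector_mult_def inner_vec_def vec_eq_iff
  by (simp add: sum_distrib_left algebra_simps)

lemma transpose_outer: "transpose (outer a n) = outer n a"
  by (simp add: outer_def transpose_def vec_eq_iff mult.commute)

lemma inner_mv: "x \<bullet> ((M::real^'n^'m) *v y) = (transpose M *v x) \<bullet> y"
  by (simp add: dot_lmul_matrix[symmetric])

lemma inner_mv_sym: "transpose M = M \<Longrightarrow> x \<bullet> ((M::real^'n^'n) *v y) = (M *v x) \<bullet> y"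
  using inner_mv[of x M y] by simp

lemma mat_eq_mv: "(\<And>x. (M::real^3^3) *v x = N *v x) \<Longrightarrow> M = N"
  by (rule iffD2[OF matrix_eq]) blast

lemma mat_eq_inner: "(\<And>x y. x \<bullet> ((M::real^3^3) *v y) = x \<bullet> (N *v y)) \<Longrightarrow> M = N"
proof (rule mat_eq_mv)
  fix y assume h: "\<And>x y. x \<bullet> ((M::real^3^3) *v y) = x \<bullet> (N *v y)"
  have "(M *v y - N *v y) \<bullet> (M *v y - N *v y) = 0"
    using h[of "M *v y - N *v y" y] by (simp add: inner_diff_right)
  thus "M *v y = N *v y" by simp
qed

definition rowsm :: "real^3 \<Rightarrow> real^3 \<Rightarrow> real^3 \<Rightarrow> real^3^3" where
  "rowsm e1 e2 e3 = (\<chi> i. if i = 1 then e1 else if i = 2 then e2 else e3)"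

lemma rowsm_mv: "rowsm e1 e2 e3 *v x = vector [e1 \<bullet> x, e2 \<bullet> x, e3 \<bullet> x]"
  unfolding rowsm_def matrix_vector_mult_def inner_vec_def
  by (simp add: vec_eq_iff forall_3 vector_3)

lemma rowsm_tmv: "transpose (rowsm e1 e2 e3) *v y = (y$1) *\<^sub>R e1 + (y$2) *\<^sub>R e2 + (y$3) *\<^sub>R e3"
  unfolding rowsm_def matrix_vector_mult_def transpose_def
  by (simp add: vec_eq_iff sum_3 mult_ac)

lemma rowsm_orth:
  assumes "orthonormal3 e1 e2 e3"
  shows "rowsm e1 e2 e3 ** transpose (rowsm e1 e2 e3) = mat 1"
proof -
  have "rowsm e1 e2 e3 *v (transpose (rowsm e1 e2 e3) *v y) = y" for y
  proof -
    have o: "e1 \<bullet> e1 = 1" "e2 \<bullet> e2 = 1" "e3 \<bullet> e3 = 1" "e1 \<bullet> e2 = 0" "e1 \<bullet> e3 = 0" "e2 \<bullet> e3 = 0"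
      "e2 \<bullet> e1 = 0" "e3 \<bullet> e1 = 0" "e3 \<bullet> e2 = 0"
      using assms unfolding orthonormal3_def by (auto simp: inner_commute)
    show ?thesis unfolding rowsm_tmv rowsm_mv
      by (simp only: inner_add_right inner_scaleR_right o vec_eq_iff forall_3 vector_3) simp
  qed
  then show ?thesis
    unfolding matrix_eq by (simp add: matrix_vector_mul_assoc[symmetric])
qed

lemma rowsm_orthogonal:
  assumes "orthonormal3 e1 e2 e3"
  shows "orthogonal_matrix (rowsm e1 e2 e3)"
  unfolding orthogonal_matrix_def
  using rowsm_orth[OF assms] matrix_left_right_inverse[of "rowsm e1 e2 e3"] by simp

lemma orthonormal_expand:
  assumes "orthonormal3 e1 e2 e3"
  shows "x = (e1 \<bullet> x) *\<^sub>R e1 + (e2 \<bullet> x) *\<^sub>R e2 + (e3 \<bullet> x) *\<^sub>R e3"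
proof -
  have "transpose (rowsm e1 e2 e3) ** rowsm e1 e2 e3 = mat 1"
    using rowsm_orthogonal[OF assms] unfolding orthogonal_matrix_def by simp
  then have "x = transpose (rowsm e1 e2 e3) *v (rowsm e1 e2 e3 *v x)"
    by (simp add: matrix_vector_mul_assoc)
  then show ?thesis unfolding rowsm_mv rowsm_tmv by (simp only: vector_3)
qed

lemma quad_max:
  fixes M :: "real^3^3" and S :: "(real^3) set"
  assumes S: "subspace S" and x0: "x0 \<in> S" "x0 \<noteq> 0"
  obtains x where "x \<in> S" "norm x = 1" "\<forall>y\<in>S. y \<bullet> (M *v y) \<le> (x \<bullet> (M *v x)) * (y \<bullet> y)"
proof -
  let ?K = "S \<inter> sphere 0 1"
  have cK: "compact ?K"
    by (simp add: S closed_subspace compact_Int_closed compact_sphere Int_commute closed_Int_compact)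
  have ne: "?K \<noteq> {}"
  proof -
    have "(1 / norm x0) *\<^sub>R x0 \<in> ?K" using x0 S by (simp add: subspace_scale)
    thus ?thesis by blast
  qed
  have ct: "continuous_on ?K (\<lambda>y. y \<bullet> (M *v y))"
    by (intro continuous_intros)
  obtain x where xK: "x \<in> ?K" and xm: "\<forall>y\<in>?K. y \<bullet> (M *v y) \<le> x \<bullet> (M *v x)"
    using continuous_attains_sup[OF cK ne ct] by blast
  have "y \<bullet> (M *v y) \<le> (x \<bullet> (M *v x)) * (y \<bullet> y)" if y: "y \<in> S" for y
  proof (cases "y = 0")
    case True then show ?thesis by simp
  next
    case False
    let ?c = "1 / norm y"
    have "?c *\<^sub>R y \<in> ?K" using y False S by (simp add: subspace_scale)
    with xm have "(?c *\<^sub>R y) \<bullet> (M *v (?c *\<^sub>R y)) \<le> x \<bullet> (M *v x)" by blast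
    then have "?c^2 * (y \<bullet> (M *v y)) \<le> x \<bullet> (M *v x)"
      by (simp add: matrix_vector_mult_scaleR power2_eq_square)
    then have i1: "(?c^2 * (y \<bullet> (M *v y))) * (norm y)^2 \<le> (x \<bullet> (M *v x)) * (norm y)^2"
      by (simp add: mult_right_mono)
    have i2: "(?c^2 * (y \<bullet> (M *v y))) * (norm y)^2 = y \<bullet> (M *v y)"
      using False by (simp add: field_simps)
    have i3: "(norm y)^2 = y \<bullet> y" by (simp add: power2_norm_eq_inner)
    show ?thesis using i1 unfolding i3 i2[unfolded i3] .
  qed
  then show ?thesis using that xK by auto
qed

lemma quad_c0:
  fixes c d :: real
  assumes "\<And>t. 2 * t * c \<le> t^2 * d" "d \<ge> 0"
  shows "c = 0"
proof -
  define u where "u = d + 1"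
  have u: "u > 0" using assms(2) unfolding u_def by simp
  define t where "t = c / u"
  have h: "2 * t * c \<le> t^2 * d" by (rule assms(1))
  have e1: "2 * t * c = (2 * c^2 * u) / u^2" using u unfolding t_def by (simp add: power2_eq_square field_simps)
  have e2: "t^2 * d = (c^2 * d) / u^2" unfolding t_def by (simp add: power_divide)
  have "(2 * c^2 * u) / u^2 \<le> (c^2 * d) / u^2" using h e1 e2 by simp
  then have "2 * c^2 * u \<le> c^2 * d" using u by (simp add: divide_le_cancel)
  then have "c^2 * (d + 2) \<le> 0" unfolding u_def by (simp add: algebra_simps)
  moreover have "d + 2 > 0" using assms(2) by simp
  ultimately have "c^2 \<le> 0" by (simp add: mult_le_0_iff)
  thus ?thesis by simp
qed

lemma lagrange:
  fixes M :: "real^3^3"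
  assumes sym: "transpose M = M" and S: "subspace S" and x: "x \<in> S" "norm x = 1"
    and mx: "\<forall>y\<in>S. y \<bullet> (M *v y) \<le> (x \<bullet> (M *v x)) * (y \<bullet> y)"
    and y: "y \<in> S"
  shows "y \<bullet> (M *v x - (x \<bullet> (M *v x)) *\<^sub>R x) = 0"
proof -
  let ?l = "x \<bullet> (M *v x)"
  have xx: "x \<bullet> x = 1" using x by (simp add: dot_square_norm)
  have syms: "x \<bullet> (M *v y) = y \<bullet> (M *v x)"
    using inner_mv_sym[OF sym, of x y] by (simp add: inner_commute)
  have "2 * t * (y \<bullet> (M *v x) - ?l * (x \<bullet> y)) \<le> t^2 * (?l * (y \<bullet> y) - y \<bullet> (M *v y))" for t
  proof -
    have "x + t *\<^sub>R y \<in> S" using S x y by (simp add: subspace_add subspace_scale)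
    with mx have "(x + t *\<^sub>R y) \<bullet> (M *v (x + t *\<^sub>R y)) \<le> ?l * ((x + t *\<^sub>R y) \<bullet> (x + t *\<^sub>R y))"
      by blast
    then show ?thesis
      by (simp add: matrix_vector_right_distrib matrix_vector_mult_scaleR inner_add_left inner_add_right
          syms xx inner_commute[of y x] power2_eq_square algebra_simps)
  qed
  moreover have "?l * (y \<bullet> y) - y \<bullet> (M *v y) \<ge> 0" using mx y by auto
  ultimately have "y \<bullet> (M *v x) - ?l * (x \<bullet> y) = 0" by (rule quad_c0)
  then show ?thesis by (simp add: inner_diff_right inner_commute)
qed

lemma eig_in_sub:
  fixes M :: "real^3^3"
  assumes sym: "transpose M = M" and S: "subspace S" and x0: "x0 \<in> S" "x0 \<noteq> 0"
    and inv: "\<And>y. y \<in> S \<Longrightarrow> M *v y \<in> S"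
  obtains x where "x \<in> S" "norm x = 1" "M *v x = (x \<bullet> (M *v x)) *\<^sub>R x"
    "\<forall>y\<in>S. y \<bullet> (M *v y) \<le> (x \<bullet> (M *v x)) * (y \<bullet> y)"
proof -
  obtain x where x: "x \<in> S" "norm x = 1" and mx: "\<forall>y\<in>S. y \<bullet> (M *v y) \<le> (x \<bullet> (M *v x)) * (y \<bullet> y)"
    using quad_max[OF S x0] by blast
  let ?v = "M *v x - (x \<bullet> (M *v x)) *\<^sub>R x"
  have "?v \<in> S" using inv[OF x(1)] x(1) S by (simp add: subspace_diff subspace_scale)
  then have "?v \<bullet> ?v = 0" using lagrange[OF sym S x mx] by blast
  then have "M *v x = (x \<bullet> (M *v x)) *\<^sub>R x" by simp
  then show ?thesis using that x mx by blast
qed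


lemma exists_orth:
  fixes S :: "(real^3) set"
  assumes "card S \<le> 2" "finite S"
  obtains x where "x \<noteq> 0" "\<And>y. y \<in> S \<Longrightarrow> y \<bullet> x = 0"
proof -
  have "dim S \<le> card S" using assms by (simp add: dim_le_card')
  then have "dim S < DIM(real^3)" using assms by simp
  then obtain x where "x \<noteq> 0" "\<And>y. y \<in> span S \<Longrightarrow> orthogonal x y"
    using orthogonal_to_subspace_exists by blast
  then have "\<And>y. y \<in> S \<Longrightarrow> y \<bullet> x = 0"
    by (simp add: orthogonal_def span_base inner_commute)
  then show ?thesis using that \<open>x \<noteq> 0\<close> by blast
qed

lemma spectral3:
  fixes M :: "real^3^3"
  assumes sym: "transpose M = M"
  obtains e1 e2 e3 l1 l2 l3 where "orthonormal3 e1 e2 e3"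
    "M *v e1 = l1 *\<^sub>R e1" "M *v e2 = l2 *\<^sub>R e2" "M *v e3 = l3 *\<^sub>R e3"
    "l1 \<le> l2" "l2 \<le> l3"
proof -
  have symi: "x \<bullet> (M *v y) = (M *v x) \<bullet> y" for x y using inner_mv_sym[OF sym] .
  obtain e3 where e3: "norm e3 = 1" "M *v e3 = (e3 \<bullet> (M *v e3)) *\<^sub>R e3"
    and m3: "\<forall>y. y \<bullet> (M *v y) \<le> (e3 \<bullet> (M *v e3)) * (y \<bullet> y)"
  proof -
    have "\<exists>x::real^3. x \<noteq> 0" by (rule exI[of _ "axis 1 1"]) simp
    then obtain x0 :: "real^3" where "x0 \<noteq> 0" by blast
    from eig_in_sub[OF sym subspace_UNIV _ this] show ?thesis using that by auto
  qed
  define l3 where "l3 = e3 \<bullet> (M *v e3)"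
  define S1 where "S1 = {y. e3 \<bullet> y = 0}"
  have S1: "subspace S1" unfolding S1_def subspace_def by (simp add: inner_add_right)
  obtain x1 where x1: "x1 \<noteq> 0" "x1 \<in> S1"
  proof -
    obtain x where "x \<noteq> 0" "\<And>y. y \<in> {e3} \<Longrightarrow> y \<bullet> x = 0"
      using exists_orth[of "{e3}"] by auto
    then show ?thesis using that[of x] unfolding S1_def by simp
  qed
  have inv1: "M *v y \<in> S1" if "y \<in> S1" for y
  proof -
    have "e3 \<bullet> (M *v y) = (M *v e3) \<bullet> y" by (rule symi)
    also have "\<dots> = (e3 \<bullet> (M *v e3)) * (e3 \<bullet> y)" by (subst e3(2)) simp
    also have "\<dots> = 0" using that unfolding S1_def by simp
    finally show ?thesis unfolding S1_def by simp
  qed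
  obtain e2 where e2: "e2 \<in> S1" "norm e2 = 1" "M *v e2 = (e2 \<bullet> (M *v e2)) *\<^sub>R e2"
    and m2: "\<forall>y\<in>S1. y \<bullet> (M *v y) \<le> (e2 \<bullet> (M *v e2)) * (y \<bullet> y)"
    using eig_in_sub[OF sym S1 x1(2) x1(1) inv1] by blast
  define l2 where "l2 = e2 \<bullet> (M *v e2)"
  define S2 where "S2 = {y. e3 \<bullet> y = 0 \<and> e2 \<bullet> y = 0}"
  have S2: "subspace S2" unfolding S2_def subspace_def by (simp add: inner_add_right)
  obtain x2 where x2: "x2 \<noteq> 0" "x2 \<in> S2"
  proof -
    have "card {e3, e2} \<le> 2" by (simp add: card_insert_if)
    then obtain x where "x \<noteq> 0" "\<And>y. y \<in> {e3, e2} \<Longrightarrow> y \<bullet> x = 0"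
      using exists_orth[of "{e3, e2}"] by auto
    then show ?thesis using that[of x] unfolding S2_def by simp
  qed
  have inv2: "M *v y \<in> S2" if "y \<in> S2" for y
  proof -
    have "e3 \<bullet> (M *v y) = (M *v e3) \<bullet> y" "e2 \<bullet> (M *v y) = (M *v e2) \<bullet> y" by (rule symi)+
    moreover have "(M *v e3) \<bullet> y = (e3 \<bullet> (M *v e3)) * (e3 \<bullet> y)" by (subst e3(2)) simp
    moreover have "(M *v e2) \<bullet> y = (e2 \<bullet> (M *v e2)) * (e2 \<bullet> y)" by (subst e2(3)) simp
    ultimately have "e3 \<bullet> (M *v y) = 0" "e2 \<bullet> (M *v y) = 0"
      using that unfolding S2_def by simp_all
    then show ?thesis unfolding S2_def by simp
  qed
  obtain e1 where e1: "e1 \<in> S2" "norm e1 = 1" "M *v e1 = (e1 \<bullet> (M *v e1)) *\<^sub>R e1"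
    using eig_in_sub[OF sym S2 x2(2) x2(1) inv2] by blast
  define l1 where "l1 = e1 \<bullet> (M *v e1)"
  have on: "orthonormal3 e1 e2 e3"
    using e1 e2 e3 unfolding orthonormal3_def S1_def S2_def
    by (simp add: dot_square_norm inner_commute)
  have "l2 \<le> l3" using m3[rule_format, of e2] e2 unfolding l2_def l3_def by (simp add: dot_square_norm)
  moreover have "l1 \<le> l2" using m2[rule_format, of e1] e1 unfolding l1_def l2_def S1_def S2_def
    by (simp add: dot_square_norm)
  ultimately show ?thesis using that[OF on] e1 e2 e3 unfolding l1_def l2_def l3_def by blast
qed

lemma smult_mv: "((k::real) *\<^sub>R (A::real^'n^'m)) *v x = k *\<^sub>R (A *v x)"
  by (simp add: scaleR_matrix_vector_assoc)

lemma neg_mv: "(- (A::real^'n^'m)) *v x = - (A *v x)"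
  by (simp add: matrix_vector_mult_def vec_eq_iff sum_negf)

lemma transpose_plus: "transpose ((A::real^'n^'m) + B) = transpose A + transpose B"
  by (simp add: transpose_def vec_eq_iff)

lemma transpose_neg: "transpose (- (A::real^'n^'m)) = - transpose A"
  by (simp add: transpose_def vec_eq_iff)

lemma transpose_minus: "transpose ((A::real^'n^'m) - B) = transpose A - transpose B"
  by (simp add: transpose_def vec_eq_iff)

lemma refl_mv: "refl_mat e *v x = (2 * (e \<bullet> x)) *\<^sub>R e - x"
  unfolding refl_mat_def
  by (simp add: matrix_vector_mult_add_rdistrib matrix_vector_mult_diff_rdistrib outer_mv smult_mv neg_mv)

lemma refl_sym: "transpose (refl_mat e) = refl_mat e"
  unfolding refl_mat_def by (simp add: transpose_outer transpose_plus transpose_minus transpose_scalar transpose_neg)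

lemma refl_sq: assumes "norm e = 1" shows "refl_mat e ** refl_mat e = mat 1"
proof (rule mat_eq_mv)
  fix x
  have ee: "e \<bullet> e = 1" using assms by (simp add: dot_square_norm)
  show "(refl_mat e ** refl_mat e) *v x = mat 1 *v x"
  proof -
    have "(refl_mat e ** refl_mat e) *v x = refl_mat e *v (refl_mat e *v x)"
      by (simp add: matrix_vector_mul_assoc)
    also have "\<dots> = x" unfolding refl_mv
      by (simp add: inner_diff_right ee scaleR_diff_right)
    finally show ?thesis by simp
  qed
qed

lemma refl_orth: assumes "norm e = 1" shows "orthogonal_matrix (refl_mat e)"
  unfolding orthogonal_matrix_def refl_sym using refl_sq[OF assms] by simp

lemma refl_det: assumes "norm e = 1" shows "det (refl_mat e) = 1"
proof -
  have n: "e$1 * e$1 + e$2 * e$2 + e$3 * e$3 = 1"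
  proof -
    have "e \<bullet> e = 1" using assms by (simp add: dot_square_norm)
    thus ?thesis by (simp add: inner_vec_def sum_3)
  qed
  show ?thesis unfolding refl_mat_def det_3 outer_def
    using n by (simp add: mat_def) algebra
qed

lemma refl_neg: "refl_mat (- e) = refl_mat e"
  unfolding refl_mat_def outer_def by simp

lemma refl_SO3: "norm e = 1 \<Longrightarrow> in_SO3 (refl_mat e)"
  unfolding in_SO3_def using refl_orth refl_det by blast


lemma sympd_inj: "sym_posdef A \<Longrightarrow> A *v x = 0 \<Longrightarrow> x = 0"
  unfolding sym_posdef_def by force

lemma sympd_invertible: assumes "sym_posdef A" shows "invertible A"
proof -
  have "\<exists>B. B ** A = mat 1"
    using matrix_left_invertible_ker sympd_inj[OF assms] by blast
  then show ?thesis using invertible_left_inverse by blast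
qed

lemma sympd_inv:
  assumes "sym_posdef A"
  shows "A ** matrix_inv A = mat 1" "matrix_inv A ** A = mat 1"
proof -
  have "\<exists>A'. A ** A' = mat 1 \<and> A' ** A = mat 1"
    using sympd_invertible[OF assms] unfolding invertible_def .
  then have "A ** matrix_inv A = mat 1 \<and> matrix_inv A ** A = mat 1"
    unfolding matrix_inv_def by (rule someI_ex)
  then show "A ** matrix_inv A = mat 1" "matrix_inv A ** A = mat 1" by auto
qed

lemma sympd_inv_mv:
  assumes "sym_posdef A"
  shows "A *v (matrix_inv A *v x) = x" "matrix_inv A *v (A *v x) = x"
  using sympd_inv[OF assms] by (simp_all add: matrix_vector_mul_assoc)

lemma sympd_sym: "sym_posdef A \<Longrightarrow> transpose A = A"
  unfolding sym_posdef_def by simp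

lemma sympd_inv_sym:
  assumes "sym_posdef A"
  shows "transpose (matrix_inv A) = matrix_inv A"
proof -
  have "transpose (matrix_inv A) ** A = mat 1"
  proof -
    have "transpose (A ** matrix_inv A) = transpose (mat 1 :: real^3^3)"
      using sympd_inv(1)[OF assms] by simp
    then show ?thesis using sympd_sym[OF assms] by (simp add: matrix_transpose_mul)
  qed
  then have "transpose (matrix_inv A) ** A ** matrix_inv A = matrix_inv A"
    by (simp add: matrix_mul_lid)
  then show ?thesis using sympd_inv(1)[OF assms]
    by (simp add: matrix_mul_assoc[symmetric] matrix_mul_rid)
qed

lemma sympd_pos: "sym_posdef A \<Longrightarrow> x \<noteq> 0 \<Longrightarrow> x \<bullet> (A *v x) > 0"
  unfolding sym_posdef_def by blast

lemma parseval:
  assumes "orthonormal3 u1 u2 u3"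
  shows "x \<bullet> y = (u1 \<bullet> x) * (u1 \<bullet> y) + (u2 \<bullet> x) * (u2 \<bullet> y) + (u3 \<bullet> x) * (u3 \<bullet> y)"
proof -
  have o: "u1 \<bullet> u1 = 1" "u2 \<bullet> u2 = 1" "u3 \<bullet> u3 = 1" "u1 \<bullet> u2 = 0" "u1 \<bullet> u3 = 0" "u2 \<bullet> u3 = 0"
      "u2 \<bullet> u1 = 0" "u3 \<bullet> u1 = 0" "u3 \<bullet> u2 = 0"
    using assms unfolding orthonormal3_def by (auto simp: inner_commute)
  have "x \<bullet> y = x \<bullet> ((u1 \<bullet> y) *\<^sub>R u1 + (u2 \<bullet> y) *\<^sub>R u2 + (u3 \<bullet> y) *\<^sub>R u3)"
    using orthonormal_expand[OF assms, of y] by simp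
  also have "\<dots> = (u1 \<bullet> x) * (u1 \<bullet> y) + (u2 \<bullet> x) * (u2 \<bullet> y) + (u3 \<bullet> x) * (u3 \<bullet> y)"
    by (simp add: inner_add_right inner_commute)
  finally show ?thesis .
qed

lemma vec_eq_basis:
  assumes "orthonormal3 u1 u2 u3" "u1 \<bullet> x = u1 \<bullet> y" "u2 \<bullet> x = u2 \<bullet> y" "u3 \<bullet> x = u3 \<bullet> y"
  shows "x = y"
  using orthonormal_expand[OF assms(1), of x] orthonormal_expand[OF assms(1), of y] assms(2-4) by simp

lemma mat_eq_basis:
  fixes M N :: "real^3^3"
  assumes on: "orthonormal3 u1 u2 u3"
    and h: "\<And>x y. x \<in> {u1, u2, u3} \<Longrightarrow> y \<in> {u1, u2, u3} \<Longrightarrow> x \<bullet> (M *v y) = x \<bullet> (N *v y)"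
  shows "M = N"
proof (rule mat_eq_mv)
  fix x
  have c: "M *v y = N *v y" if "y \<in> {u1, u2, u3}" for y
    by (rule vec_eq_basis[OF on]) (use h that in auto)
  have "M *v x = M *v ((u1 \<bullet> x) *\<^sub>R u1 + (u2 \<bullet> x) *\<^sub>R u2 + (u3 \<bullet> x) *\<^sub>R u3)"
    using orthonormal_expand[OF on, of x] by simp
  also have "\<dots> = (u1 \<bullet> x) *\<^sub>R (M *v u1) + (u2 \<bullet> x) *\<^sub>R (M *v u2) + (u3 \<bullet> x) *\<^sub>R (M *v u3)"
    by (simp add: matrix_vector_right_distrib matrix_vector_mult_scaleR)
  also have "\<dots> = (u1 \<bullet> x) *\<^sub>R (N *v u1) + (u2 \<bullet> x) *\<^sub>R (N *v u2) + (u3 \<bullet> x) *\<^sub>R (N *v u3)"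
    using c by simp
  also have "\<dots> = N *v ((u1 \<bullet> x) *\<^sub>R u1 + (u2 \<bullet> x) *\<^sub>R u2 + (u3 \<bullet> x) *\<^sub>R u3)"
    by (simp add: matrix_vector_right_distrib matrix_vector_mult_scaleR)
  also have "\<dots> = N *v x"
    using orthonormal_expand[OF on, of x] by simp
  finally show "M *v x = N *v x" .
qed

lemma sqrt_unique:
  assumes X: "sym_posdef X" and Y: "sym_posdef Y" and eq: "X ** X = Y ** Y"
  shows "X = Y"
proof -
  define D where "D = X - Y"
  have sD: "transpose D = D" unfolding D_def using X Y by (simp add: transpose_minus sympd_sym)
  have key: "l = 0" if v: "norm v = 1" "D *v v = l *\<^sub>R v" for v l
  proof -
    have "v \<noteq> 0" using v by auto
    have "(X ** X) *v v = (Y ** Y) *v v" using eq by simp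
    then have "X *v (X *v v) = Y *v (Y *v v)" by (simp add: matrix_vector_mul_assoc)
    then have "X *v (D *v v) + D *v (Y *v v) = 0"
      unfolding D_def by (simp add: matrix_vector_mult_diff_rdistrib matrix_vector_mult_diff_distrib)
    then have "v \<bullet> (X *v (D *v v) + D *v (Y *v v)) = 0"
      by simp
    then have "v \<bullet> (X *v (D *v v)) + v \<bullet> (D *v (Y *v v)) = 0"
      by (simp only: inner_add_right)
    moreover have "v \<bullet> (D *v (Y *v v)) = (D *v v) \<bullet> (Y *v v)" by (rule inner_mv_sym[OF sD])
    ultimately have "l * (v \<bullet> (X *v v)) + l * (v \<bullet> (Y *v v)) = 0"
      using v(2) by (simp add: matrix_vector_mult_scaleR)
    then have "l * (v \<bullet> (X *v v) + v \<bullet> (Y *v v)) = 0" by (simp add: algebra_simps)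
    moreover have "v \<bullet> (X *v v) + v \<bullet> (Y *v v) > 0"
      using sympd_pos[OF X \<open>v \<noteq> 0\<close>] sympd_pos[OF Y \<open>v \<noteq> 0\<close>] by simp
    ultimately show ?thesis by simp
  qed
  obtain e1 e2 e3 l1 l2 l3 where on: "orthonormal3 e1 e2 e3"
    and ev: "D *v e1 = l1 *\<^sub>R e1" "D *v e2 = l2 *\<^sub>R e2" "D *v e3 = l3 *\<^sub>R e3"
    and "l1 \<le> l2" "l2 \<le> l3"
    by (rule spectral3[OF sD])
  have n: "norm e1 = 1" "norm e2 = 1" "norm e3 = 1"
    using on unfolding orthonormal3_def by (simp_all add: norm_eq_1)
  have "l1 = 0" "l2 = 0" "l3 = 0" using key n ev by auto
  then have "D *v e1 = 0" "D *v e2 = 0" "D *v e3 = 0" using ev by auto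
  then have "D = 0"
    by (intro mat_eq_basis[OF on]) auto
  then show ?thesis unfolding D_def by simp
qed

lemma star_to_rank1:
  assumes hA: "sym_posdef A" and e: "norm e = 1" and hB: "B = refl_mat e ** A ** refl_mat e"
  shows "rank_one_connected A B"
proof -
  define Ai where "Ai = matrix_inv A"
  define p where "p = Ai *v e"
  have Ap: "A *v p = e" unfolding p_def Ai_def using sympd_inv_mv[OF hA] by simp
  have pnz: "p \<noteq> 0" using Ap e by auto
  define u where "u = (1 / norm p) *\<^sub>R p"
  have nu: "norm u = 1" unfolding u_def using pnz by simp
  define Q where "Q = refl_mat u ** refl_mat e"
  define a where "a = (2 / (norm p)^2) *\<^sub>R p - 2 *\<^sub>R (A *v e)"
  have sA: "transpose A = A" using sympd_sym[OF hA] .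
  have ee: "e \<bullet> e = 1" using e by (simp add: dot_square_norm)
  have uA: "u \<bullet> (A *v x) = (e \<bullet> x) / norm p" for x
  proof -
    have "u \<bullet> (A *v x) = (A *v u) \<bullet> x" by (rule inner_mv_sym[OF sA])
    also have "A *v u = (1 / norm p) *\<^sub>R e" unfolding u_def by (simp add: matrix_vector_mult_scaleR Ap)
    finally show ?thesis by simp
  qed
  have "Q ** B = refl_mat u ** A ** refl_mat e"
  proof -
    have "refl_mat u ** refl_mat e ** refl_mat e = refl_mat u"
      using refl_sq[OF e] by (simp add: matrix_mul_assoc[symmetric] matrix_mul_rid)
    then show ?thesis unfolding Q_def hB by (simp add: matrix_mul_assoc)
  qed
  moreover have "refl_mat u ** A ** refl_mat e - A = outer a e"
  proof (rule mat_eq_mv)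
    fix x
    have "(refl_mat u ** A ** refl_mat e - A) *v x = refl_mat u *v (A *v (refl_mat e *v x)) - A *v x"
      by (simp add: matrix_vector_mult_diff_rdistrib matrix_vector_mul_assoc[symmetric])
    also have "\<dots> = (e \<bullet> x) *\<^sub>R a"
    proof -
      have 1: "A *v (refl_mat e *v x) = (2 * (e \<bullet> x)) *\<^sub>R (A *v e) - A *v x"
        by (simp add: refl_mv matrix_vector_mult_diff_distrib matrix_vector_mult_scaleR)
      have 2: "u \<bullet> (A *v (refl_mat e *v x)) = (e \<bullet> x) / norm p"
        unfolding 1 using uA[of e] uA[of x] ee by (simp add: inner_diff_right field_simps)
      have "refl_mat u *v (A *v (refl_mat e *v x)) = (2 * ((e \<bullet> x) / norm p)) *\<^sub>R u - A *v (refl_mat e *v x)"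
        by (simp only: refl_mv[of u] 2)
      also have "\<dots> = (2 * ((e \<bullet> x) / norm p) / norm p) *\<^sub>R p - (2 * (e \<bullet> x)) *\<^sub>R (A *v e) + A *v x"
        unfolding 1 u_def by (simp add: algebra_simps)
      finally show ?thesis unfolding a_def
        by (simp add: algebra_simps power2_eq_square)
    qed
    also have "\<dots> = outer a e *v x" by (simp add: outer_mv)
    finally show "(refl_mat u ** A ** refl_mat e - A) *v x = outer a e *v x" .
  qed
  moreover have "in_SO3 Q"
  proof -
    have "orthogonal_matrix Q" unfolding Q_def using refl_orth[OF nu] refl_orth[OF e]
      by (simp add: orthogonal_matrix_mul)
    moreover have "det Q = 1" unfolding Q_def by (simp add: det_mul refl_det[OF nu] refl_det[OF e])
    ultimately show ?thesis unfolding in_SO3_def by simp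
  qed
  ultimately show ?thesis unfolding rank_one_connected_def by metis
qed

definition Cm :: "real^3^3 \<Rightarrow> real^3^3 \<Rightarrow> real^3^3" where
  "Cm A B = matrix_inv A ** (B ** B) ** matrix_inv A"

lemma C_inner:
  assumes hA: "sym_posdef A" and hB: "sym_posdef B"
  shows "x \<bullet> (Cm A B *v y) = (B *v (matrix_inv A *v x)) \<bullet> (B *v (matrix_inv A *v y))"
proof -
  have sI: "transpose (matrix_inv A) = matrix_inv A" using sympd_inv_sym[OF hA] .
  have sB: "transpose B = B" using sympd_sym[OF hB] .
  have "x \<bullet> (Cm A B *v y) = x \<bullet> (matrix_inv A *v (B *v (B *v (matrix_inv A *v y))))"
    unfolding Cm_def by (simp add: matrix_vector_mul_assoc[symmetric])
  also have "\<dots> = (matrix_inv A *v x) \<bullet> (B *v (B *v (matrix_inv A *v y)))"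
    by (rule inner_mv_sym[OF sI])
  also have "\<dots> = (B *v (matrix_inv A *v x)) \<bullet> (B *v (matrix_inv A *v y))"
    by (rule inner_mv_sym[OF sB])
  finally show ?thesis .
qed

lemma C_sym:
  assumes hA: "sym_posdef A" and hB: "sym_posdef B"
  shows "transpose (Cm A B) = Cm A B"
  unfolding Cm_def using sympd_inv_sym[OF hA] sympd_sym[OF hB]
  by (simp add: matrix_transpose_mul matrix_mul_assoc)

lemma C_pos:
  assumes hA: "sym_posdef A" and hB: "sym_posdef B" and x: "x \<noteq> 0"
  shows "x \<bullet> (Cm A B *v x) > 0"
proof -
  have "matrix_inv A *v x \<noteq> 0" using sympd_inv_mv(1)[OF hA, of x] x by auto
  then have "B *v (matrix_inv A *v x) \<noteq> 0" using sympd_inj[OF hB] by blast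
  then show ?thesis unfolding C_inner[OF hA hB] by simp
qed

lemma orth_inner:
  fixes Q :: "real^3^3"
  assumes "orthogonal_matrix Q"
  shows "(Q *v x) \<bullet> (Q *v y) = x \<bullet> y"
proof -
  have "(Q *v x) \<bullet> (Q *v y) = (transpose Q *v (Q *v x)) \<bullet> y"
    by (simp only: inner_mv[of "Q *v x" Q y])
  also have "transpose Q *v (Q *v x) = x"
    using assms unfolding orthogonal_matrix_def by (simp add: matrix_vector_mul_assoc)
  finally show ?thesis by simp
qed

lemma rank1_form:
  assumes hA: "sym_posdef A" and hB: "sym_posdef B" and r1: "rank_one_connected A B"
  obtains m where "\<And>x. m \<bullet> x = 0 \<Longrightarrow> x \<bullet> (Cm A B *v x) = x \<bullet> x"
proof -
  obtain Q a n where Q: "in_SO3 Q" and eq: "Q ** B - A = outer a n"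
    using r1 unfolding rank_one_connected_def by blast
  define m where "m = matrix_inv A *v n"
  have sI: "transpose (matrix_inv A) = matrix_inv A" using sympd_inv_sym[OF hA] .
  have "x \<bullet> (Cm A B *v x) = x \<bullet> x" if mx: "m \<bullet> x = 0" for x
  proof -
    define y where "y = matrix_inv A *v x"
    have "(Q ** B - A) *v y = (n \<bullet> y) *\<^sub>R a" unfolding eq by (simp add: outer_mv)
    moreover have "n \<bullet> y = m \<bullet> x" unfolding y_def m_def
      using inner_mv_sym[OF sI, of n x] by simp
    ultimately have "Q *v (B *v y) - A *v y = 0"
      using mx by (simp add: matrix_vector_mult_diff_rdistrib matrix_vector_mul_assoc)
    then have "Q *v (B *v y) = x" unfolding y_def using sympd_inv_mv(1)[OF hA] by simp
    then have "(B *v y) \<bullet> (B *v y) = x \<bullet> x"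
      using orth_inner[of Q "B *v y" "B *v y"] Q unfolding in_SO3_def by simp
    then show ?thesis unfolding C_inner[OF hA hB] y_def .
  qed
  then show ?thesis using that by blast
qed


definition diag3 :: "real \<Rightarrow> real \<Rightarrow> real \<Rightarrow> real^3^3" where
  "diag3 l1 l2 l3 = (\<chi> i j. if i = j then (vector [l1, l2, l3] :: real^3)$i else 0)"

lemma diag3_mv: "diag3 l1 l2 l3 *v y = vector [l1 * y$1, l2 * y$2, l3 * y$3]"
  unfolding diag3_def matrix_vector_mult_def
  by (simp add: vec_eq_iff forall_3 sum_3 vector_3)

lemma det_diag3: "det (diag3 l1 l2 l3) = l1 * l2 * l3"
  unfolding diag3_def det_3 by (simp add: vector_3)

lemma eig_repr:
  fixes M :: "real^3^3"
  assumes on: "orthonormal3 u1 u2 u3"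
    and ev: "M *v u1 = l1 *\<^sub>R u1" "M *v u2 = l2 *\<^sub>R u2" "M *v u3 = l3 *\<^sub>R u3"
  shows "M = transpose (rowsm u1 u2 u3) ** diag3 l1 l2 l3 ** rowsm u1 u2 u3"
proof (rule mat_eq_mv)
  fix x
  have "M *v x = M *v ((u1 \<bullet> x) *\<^sub>R u1 + (u2 \<bullet> x) *\<^sub>R u2 + (u3 \<bullet> x) *\<^sub>R u3)"
    using orthonormal_expand[OF on, of x] by simp
  also have "\<dots> = (u1 \<bullet> x) *\<^sub>R (l1 *\<^sub>R u1) + (u2 \<bullet> x) *\<^sub>R (l2 *\<^sub>R u2) + (u3 \<bullet> x) *\<^sub>R (l3 *\<^sub>R u3)"
    by (simp add: matrix_vector_right_distrib matrix_vector_mult_scaleR ev)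
  also have "\<dots> = (transpose (rowsm u1 u2 u3) ** diag3 l1 l2 l3 ** rowsm u1 u2 u3) *v x"
    by (simp add: matrix_vector_mul_assoc[symmetric] rowsm_mv diag3_mv vector_3 rowsm_tmv mult.commute
      del: transpose_matrix_vector)
  finally show "M *v x = (transpose (rowsm u1 u2 u3) ** diag3 l1 l2 l3 ** rowsm u1 u2 u3) *v x" .
qed

lemma eig_det:
  fixes M :: "real^3^3"
  assumes on: "orthonormal3 u1 u2 u3"
    and ev: "M *v u1 = l1 *\<^sub>R u1" "M *v u2 = l2 *\<^sub>R u2" "M *v u3 = l3 *\<^sub>R u3"
  shows "det M = l1 * l2 * l3"
proof -
  have "det (rowsm u1 u2 u3) = 1 \<or> det (rowsm u1 u2 u3) = -1"
    using det_orthogonal_matrix[OF rowsm_orthogonal[OF on]] .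
  then have d: "det (rowsm u1 u2 u3) * det (rowsm u1 u2 u3) = 1" by auto
  show ?thesis
    apply (subst eig_repr[OF on ev])
    using d by (simp add: det_mul det_diag3 algebra_simps)
qed

lemma det_C:
  assumes hA: "sym_posdef A" and hB: "sym_posdef B" and hR: "in_O3 R"
    and hBR: "B = R ** A ** transpose R"
  shows "det (Cm A B) = 1"
proof -
  have "det R = 1 \<or> det R = -1" using det_orthogonal_matrix hR unfolding in_O3_def by blast
  then have dR: "det R * det R = 1" by auto
  have dB: "det B = det A" unfolding hBR using dR by (simp add: det_mul algebra_simps)
  have dI: "det (matrix_inv A) * det A = 1"
  proof -
    have "det (matrix_inv A ** A) = det (mat 1 :: real^3^3)" using sympd_inv(2)[OF hA] by simp
    then show ?thesis by (simp add: det_mul)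
  qed
  have "det (Cm A B) = (det (matrix_inv A) * det A) * (det (matrix_inv A) * det A)"
    unfolding Cm_def by (simp add: det_mul dB algebra_simps)
  then show ?thesis using dI by simp
qed

lemma entry_lemma:
  fixes X M Y :: "real^3^3"
  shows "(X ** M ** transpose Y)$i$j = (X$i) \<bullet> (M *v (Y$j))"
proof -
  have "(X ** M ** transpose Y)$i$j = (\<Sum>k\<in>UNIV. (\<Sum>l\<in>UNIV. X$i$l * M$l$k) * Y$j$k)"
    unfolding matrix_matrix_mult_def transpose_def by simp
  also have "\<dots> = (\<Sum>k\<in>UNIV. \<Sum>l\<in>UNIV. X$i$l * M$l$k * Y$j$k)"
    by (simp add: sum_distrib_right)
  also have "\<dots> = (\<Sum>l\<in>UNIV. \<Sum>k\<in>UNIV. X$i$l * M$l$k * Y$j$k)"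
    by (rule sum.swap)
  also have "\<dots> = (\<Sum>l\<in>UNIV. X$i$l * (\<Sum>k\<in>UNIV. M$l$k * Y$j$k))"
    by (simp add: sum_distrib_left mult.assoc)
  also have "\<dots> = (X$i) \<bullet> (M *v (Y$j))"
    unfolding matrix_vector_mult_def inner_vec_def by simp
  finally show ?thesis .
qed

lemma trace_basis:
  fixes M :: "real^3^3"
  assumes on: "orthonormal3 u1 u2 u3"
  shows "trace M = u1 \<bullet> (M *v u1) + u2 \<bullet> (M *v u2) + u3 \<bullet> (M *v u3)"
proof -
  let ?V = "rowsm u1 u2 u3"
  have "transpose ?V ** ?V = mat 1"
    using rowsm_orthogonal[OF on] unfolding orthogonal_matrix_def by simp
  then have "trace M = trace (M ** (transpose ?V ** ?V))" by (simp add: matrix_mul_rid)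
  also have "\<dots> = trace ((M ** transpose ?V) ** ?V)" by (simp add: matrix_mul_assoc)
  also have "\<dots> = trace (?V ** (M ** transpose ?V))" by (rule trace_mul_sym)
  also have "\<dots> = trace (?V ** M ** transpose ?V)" by (simp add: matrix_mul_assoc)
  also have "\<dots> = u1 \<bullet> (M *v u1) + u2 \<bullet> (M *v u2) + u3 \<bullet> (M *v u3)"
    unfolding trace_def sum_3 entry_lemma by (simp add: rowsm_def)
  finally show ?thesis .
qed

lemma trace_conj:
  fixes X R :: "real^3^3"
  assumes "orthogonal_matrix R"
  shows "trace (R ** X ** transpose R) = trace X"
proof -
  have "trace (R ** X ** transpose R) = trace (transpose R ** (R ** X))" by (rule trace_mul_sym)
  also have "\<dots> = trace ((transpose R ** R) ** X)" by (simp add: matrix_mul_assoc)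
  also have "\<dots> = trace X" using assms unfolding orthogonal_matrix_def by (simp add: matrix_mul_lid)
  finally show ?thesis .
qed


lemma plane_lemma:
  fixes m u v :: "real^3"
  obtains c1 c2 where "c1 \<noteq> 0 \<or> c2 \<noteq> 0" "m \<bullet> (c1 *\<^sub>R u + c2 *\<^sub>R v) = 0"
proof (cases "m \<bullet> u = 0 \<and> m \<bullet> v = 0")
  case True
  then show ?thesis using that[of 1 0] by simp
next
  case False
  then show ?thesis using that[of "m \<bullet> v" "- (m \<bullet> u)"]
    by (auto simp: inner_add_right algebra_simps)
qed

lemma quad_val:
  fixes C :: "real^3^3"
  assumes "u \<bullet> u = 1" "v \<bullet> v = 1" "u \<bullet> v = 0" "C *v u = a *\<^sub>R u" "C *v v = b *\<^sub>R v"
  shows "(c1 *\<^sub>R u + c2 *\<^sub>R v) \<bullet> (C *v (c1 *\<^sub>R u + c2 *\<^sub>R v)) = a * c1^2 + b * c2^2"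
    "(c1 *\<^sub>R u + c2 *\<^sub>R v) \<bullet> (c1 *\<^sub>R u + c2 *\<^sub>R v) = c1^2 + c2^2"
  using assms by (simp_all add: matrix_vector_right_distrib matrix_vector_mult_scaleR inner_add_left
      inner_add_right inner_commute[of v u] power2_eq_square algebra_simps)

lemma le_sq: "(a::real) \<le> 1 \<Longrightarrow> a * c^2 \<le> c^2"
  using mult_right_mono[of a 1 "c^2"] by simp
lemma lt_sq: "(a::real) < 1 \<Longrightarrow> c \<noteq> 0 \<Longrightarrow> a * c^2 < c^2"
  using mult_strict_right_mono[of a 1 "c^2"] by simp
lemma ge_sq: "(a::real) \<ge> 1 \<Longrightarrow> a * c^2 \<ge> c^2"
  using mult_right_mono[of 1 a "c^2"] by simp
lemma gt_sq: "(a::real) > 1 \<Longrightarrow> c \<noteq> 0 \<Longrightarrow> a * c^2 > c^2"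
  using mult_strict_right_mono[of 1 a "c^2"] by simp

lemma eig_main:
  assumes hA: "sym_posdef A" and hB: "sym_posdef B" and hR: "in_O3 R"
    and hBR: "B = R ** A ** transpose R" and r1: "rank_one_connected A B"
  obtains u1 u2 u3 l1 l3 where "orthonormal3 u1 u2 u3"
    "Cm A B *v u1 = l1 *\<^sub>R u1" "Cm A B *v u2 = u2" "Cm A B *v u3 = l3 *\<^sub>R u3"
    "0 < l1" "l1 \<le> 1" "1 \<le> l3" "l1 * l3 = 1"
proof -
  let ?C = "Cm A B"
  obtain u1 u2 u3 l1 l2 l3 where on: "orthonormal3 u1 u2 u3"
    and ev: "?C *v u1 = l1 *\<^sub>R u1" "?C *v u2 = l2 *\<^sub>R u2" "?C *v u3 = l3 *\<^sub>R u3"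
    and o: "l1 \<le> l2" "l2 \<le> l3"
    by (rule spectral3[OF C_sym[OF hA hB]])
  have oo: "u1 \<bullet> u1 = 1" "u2 \<bullet> u2 = 1" "u3 \<bullet> u3 = 1" "u1 \<bullet> u2 = 0" "u1 \<bullet> u3 = 0" "u2 \<bullet> u3 = 0"
    using on unfolding orthonormal3_def by auto
  have "u1 \<noteq> 0" using oo by auto
  then have l1p: "l1 > 0" using C_pos[OF hA hB, of u1] ev oo by simp
  obtain m where hm: "\<And>x. m \<bullet> x = 0 \<Longrightarrow> x \<bullet> (?C *v x) = x \<bullet> x"
    using rank1_form[OF hA hB r1] by blast
  have l2: "l2 = 1"
  proof (rule ccontr)
    assume ne: "l2 \<noteq> 1"
    show False
    proof (cases "l2 < 1")
      case True
      obtain c1 c2 where c: "c1 \<noteq> 0 \<or> c2 \<noteq> 0" "m \<bullet> (c1 *\<^sub>R u1 + c2 *\<^sub>R u2) = 0"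
        by (rule plane_lemma)
      from hm[OF c(2)] quad_val[OF oo(1) oo(2) oo(4) ev(1) ev(2), of c1 c2]
      have "l1 * c1^2 + l2 * c2^2 = c1^2 + c2^2" by simp
      moreover have "l1 * c1^2 \<le> c1^2" "l2 * c2^2 \<le> c2^2"
        using True o by (intro le_sq; simp)+
      moreover have "l1 * c1^2 < c1^2 \<or> l2 * c2^2 < c2^2"
        using c(1) True o lt_sq[of l1 c1] lt_sq[of l2 c2] by auto
      ultimately show False by linarith
    next
      case False
      then have gt: "l2 > 1" using ne by simp
      obtain c1 c2 where c: "c1 \<noteq> 0 \<or> c2 \<noteq> 0" "m \<bullet> (c1 *\<^sub>R u2 + c2 *\<^sub>R u3) = 0"
        by (rule plane_lemma)
      from hm[OF c(2)] quad_val[OF oo(2) oo(3) oo(6) ev(2) ev(3), of c1 c2]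
      have "l2 * c1^2 + l3 * c2^2 = c1^2 + c2^2" by simp
      moreover have "l2 * c1^2 \<ge> c1^2" "l3 * c2^2 \<ge> c2^2"
        using gt o by (intro ge_sq; simp)+
      moreover have "l2 * c1^2 > c1^2 \<or> l3 * c2^2 > c2^2"
        using c(1) gt o gt_sq[of l2 c1] gt_sq[of l3 c2] by auto
      ultimately show False by linarith
    qed
  qed
  have "l1 * l2 * l3 = 1"
    using eig_det[OF on ev] det_C[OF hA hB hR hBR] by simp
  then have "l1 * l3 = 1" using l2 by simp
  then show ?thesis using that[OF on ev(1) _ ev(3) l1p] ev(2) l2 o by simp
qed


lemma eig_bilin:
  fixes M :: "real^3^3"
  assumes on: "orthonormal3 u1 u2 u3" and sM: "transpose M = M"
    and ev: "M *v u1 = l1 *\<^sub>R u1" "M *v u2 = l2 *\<^sub>R u2" "M *v u3 = l3 *\<^sub>R u3"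
  shows "w \<bullet> (M *v z) = l1 * (u1 \<bullet> w) * (u1 \<bullet> z) + l2 * (u2 \<bullet> w) * (u2 \<bullet> z) + l3 * (u3 \<bullet> w) * (u3 \<bullet> z)"
proof -
  have h: "u \<bullet> (M *v z) = (M *v u) \<bullet> z" for u by (rule inner_mv_sym[OF sM])
  have hh: "u1 \<bullet> (M *v z) = l1 * (u1 \<bullet> z)" "u2 \<bullet> (M *v z) = l2 * (u2 \<bullet> z)" "u3 \<bullet> (M *v z) = l3 * (u3 \<bullet> z)"
    by (simp_all only: h ev inner_scaleR_left)
  show ?thesis using parseval[OF on, of w "M *v z"] unfolding hh by simp
qed

lemma BB_conj:
  assumes hR: "in_O3 R" and hBR: "B = R ** A ** transpose R"
  shows "B ** B = R ** (A ** A) ** transpose R"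
    "B ** B ** (B ** B) = R ** (A ** A ** (A ** A)) ** transpose R"
proof -
  have RR: "transpose R ** R = mat 1" using hR unfolding in_O3_def orthogonal_matrix_def by simp
  have "B ** B = R ** A ** (transpose R ** R) ** A ** transpose R"
    unfolding hBR by (simp add: matrix_mul_assoc)
  also have "\<dots> = R ** (A ** A) ** transpose R"
    unfolding RR by (simp add: matrix_mul_rid matrix_mul_assoc)
  finally show b2: "B ** B = R ** (A ** A) ** transpose R" .
  have "B ** B ** (B ** B) = R ** (A ** A) ** (transpose R ** R) ** (A ** A) ** transpose R"
    unfolding b2 by (simp add: matrix_mul_assoc)
  also have "\<dots> = R ** (A ** A ** (A ** A)) ** transpose R"
    unfolding RR by (simp add: matrix_mul_rid matrix_mul_assoc)
  finally show "B ** B ** (B ** B) = R ** (A ** A ** (A ** A)) ** transpose R" .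
qed

lemma BB_C:
  assumes hA: "sym_posdef A"
  shows "B ** B = A ** Cm A B ** A"
proof -
  have "A ** Cm A B ** A = (A ** matrix_inv A) ** (B ** B) ** (matrix_inv A ** A)"
    unfolding Cm_def by (simp add: matrix_mul_assoc)
  also have "\<dots> = B ** B" using sympd_inv[OF hA] by (simp add: matrix_mul_lid matrix_mul_rid)
  finally show ?thesis by simp
qed

lemma g_ids:
  assumes hA: "sym_posdef A" and hB: "sym_posdef B" and hR: "in_O3 R"
    and hBR: "B = R ** A ** transpose R"
    and on: "orthonormal3 u1 u2 u3"
    and ev: "Cm A B *v u1 = l1 *\<^sub>R u1" "Cm A B *v u2 = u2" "Cm A B *v u3 = l3 *\<^sub>R u3"
    and l13: "l1 * l3 = 1" and l3: "l3 \<noteq> 1"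
  shows "u1 \<bullet> ((A ** A) *v u1) = l3 * (u3 \<bullet> ((A ** A) *v u3))"
    "(u2 \<bullet> ((A ** A) *v u1))^2 = l3 * (u2 \<bullet> ((A ** A) *v u3))^2"
proof -
  let ?C = "Cm A B"
  define G where "G = A ** A"
  have ev2: "?C *v u2 = 1 *\<^sub>R u2" using ev(2) by simp
  have sC: "transpose ?C = ?C" by (rule C_sym[OF hA hB])
  have sG: "transpose G = G" unfolding G_def using sympd_sym[OF hA] by (simp add: matrix_transpose_mul)
  have RO: "orthogonal_matrix R" using hR unfolding in_O3_def .
  define g11 where "g11 = u1 \<bullet> (G *v u1)"
  define g22 where "g22 = u2 \<bullet> (G *v u2)"
  define g33 where "g33 = u3 \<bullet> (G *v u3)"
  define g12 where "g12 = u1 \<bullet> (G *v u2)"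
  define g13 where "g13 = u1 \<bullet> (G *v u3)"
  define g23 where "g23 = u2 \<bullet> (G *v u3)"
  have Cl: "u \<bullet> (?C *v z) = (?C *v u) \<bullet> z" for u z by (rule inner_mv_sym[OF sC])
  have Gl: "u \<bullet> (G *v z) = (G *v u) \<bullet> z" for u z by (rule inner_mv_sym[OF sG])
  have Gsw: "u \<bullet> (G *v z) = z \<bullet> (G *v u)" for u z
    using Gl[of u z] by (simp add: inner_commute)
  have gs: "u2 \<bullet> (G *v u1) = g12" "u3 \<bullet> (G *v u1) = g13" "u3 \<bullet> (G *v u2) = g23"
    unfolding g12_def g13_def g23_def by (rule Gsw)+
  have t1: "trace (B ** B) = trace G"
    unfolding BB_conj(1)[OF hR hBR] G_def by (rule trace_conj[OF RO])
  have t2: "trace (B ** B ** (B ** B)) = trace (G ** G)"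
    unfolding BB_conj(2)[OF hR hBR] G_def by (rule trace_conj[OF RO])
  have t3: "trace (B ** B) = trace (?C ** G)"
  proof -
    have "trace (B ** B) = trace (A ** (?C ** A))" unfolding BB_C[OF hA, of B] by (simp add: matrix_mul_assoc)
    also have "\<dots> = trace ((?C ** A) ** A)" by (rule trace_mul_sym)
    finally show ?thesis unfolding G_def by (simp add: matrix_mul_assoc)
  qed
  have t4: "trace (B ** B ** (B ** B)) = trace (?C ** G ** ?C ** G)"
  proof -
    have "trace (B ** B ** (B ** B)) = trace (A ** (?C ** G ** ?C ** A))"
      unfolding BB_C[OF hA, of B] G_def by (simp add: matrix_mul_assoc)
    also have "\<dots> = trace ((?C ** G ** ?C ** A) ** A)" by (rule trace_mul_sym)
    finally show ?thesis unfolding G_def by (simp add: matrix_mul_assoc)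
  qed
  have e1: "trace G = g11 + g22 + g33"
    unfolding trace_basis[OF on] g11_def g22_def g33_def ..
  have e2: "trace (?C ** G) = l1 * g11 + g22 + l3 * g33"
    unfolding trace_basis[OF on] g11_def g22_def g33_def
    by (simp only: matrix_vector_mul_assoc[symmetric] Cl ev inner_scaleR_left)
  have sq: "(G *v u) \<bullet> (G *v u) = (u1 \<bullet> (G *v u))^2 + (u2 \<bullet> (G *v u))^2 + (u3 \<bullet> (G *v u))^2" for u
    using parseval[OF on, of "G *v u" "G *v u"] by (simp add: power2_eq_square)
  have e3: "trace (G ** G) = g11^2 + g22^2 + g33^2 + 2 * g12^2 + 2 * g13^2 + 2 * g23^2"
  proof -
    have "trace (G ** G) = (G *v u1) \<bullet> (G *v u1) + (G *v u2) \<bullet> (G *v u2) + (G *v u3) \<bullet> (G *v u3)"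
      unfolding trace_basis[OF on] by (simp only: matrix_vector_mul_assoc[symmetric] Gl[of _ "G *v _"])
    also have "\<dots> = g11^2 + g22^2 + g33^2 + 2 * g12^2 + 2 * g13^2 + 2 * g23^2"
      unfolding sq gs g11_def[symmetric] g22_def[symmetric] g33_def[symmetric] g12_def[symmetric]
        g13_def[symmetric] g23_def[symmetric] by simp
    finally show ?thesis .
  qed
  have bl: "w \<bullet> (?C *v z) = l1 * (u1 \<bullet> w) * (u1 \<bullet> z) + 1 * (u2 \<bullet> w) * (u2 \<bullet> z) + l3 * (u3 \<bullet> w) * (u3 \<bullet> z)" for w z
    by (rule eig_bilin[OF on sC ev(1) ev2 ev(3)])
  have e4: "trace (?C ** G ** ?C ** G) = l1 * (l1 * g11^2 + g12^2 + l3 * g13^2)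
      + (l1 * g12^2 + g22^2 + l3 * g23^2) + l3 * (l1 * g13^2 + g23^2 + l3 * g33^2)"
  proof -
    have "trace (?C ** G ** ?C ** G) = l1 * ((G *v u1) \<bullet> (?C *v (G *v u1)))
      + (G *v u2) \<bullet> (?C *v (G *v u2)) + l3 * ((G *v u3) \<bullet> (?C *v (G *v u3)))"
    proof -
      have st: "u \<bullet> ((?C ** G ** ?C ** G) *v u) = (G *v (?C *v u)) \<bullet> (?C *v (G *v u))" for u
      proof -
        have "u \<bullet> ((?C ** G ** ?C ** G) *v u) = u \<bullet> (?C *v (G *v (?C *v (G *v u))))"
          by (simp only: matrix_vector_mul_assoc matrix_mul_assoc)
        also have "\<dots> = (?C *v u) \<bullet> (G *v (?C *v (G *v u)))" by (rule Cl)
        also have "\<dots> = (G *v (?C *v u)) \<bullet> (?C *v (G *v u))" by (rule Gl)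
        finally show ?thesis .
      qed
      show ?thesis unfolding trace_basis[OF on] st ev
        by (simp add: matrix_vector_mult_scaleR)
    qed
    also have "\<dots> = l1 * (l1 * g11^2 + g12^2 + l3 * g13^2)
      + (l1 * g12^2 + g22^2 + l3 * g23^2) + l3 * (l1 * g13^2 + g23^2 + l3 * g33^2)"
      unfolding bl gs g11_def[symmetric] g22_def[symmetric] g33_def[symmetric] g12_def[symmetric]
        g13_def[symmetric] g23_def[symmetric] by (simp add: power2_eq_square mult.assoc)
    finally show ?thesis .
  qed
  have E1: "l1 * g11 + g22 + l3 * g33 = g11 + g22 + g33" using t1 t3 e1 e2 by simp
  have E2: "l1 * (l1 * g11^2 + g12^2 + l3 * g13^2)
      + (l1 * g12^2 + g22^2 + l3 * g23^2) + l3 * (l1 * g13^2 + g23^2 + l3 * g33^2)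
      = g11^2 + g22^2 + g33^2 + 2 * g12^2 + 2 * g13^2 + 2 * g23^2" using t2 t4 e3 e4 by simp
  have "(l3 - 1) * (l3 * g33 - g11) = 0"
  proof -
    have "l3 * (l1 * g11 + g22 + l3 * g33) = l3 * (g11 + g22 + g33)" using E1 by simp
    then show ?thesis using l13 by (simp add: algebra_simps)
  qed
  then have G1: "g11 = l3 * g33" using l3 by simp
  have "(l3 - 1) * (l3 * g23^2 - g12^2) = 0"
  proof -
    have "l3 * (l1 * (l1 * g11^2 + g12^2 + l3 * g13^2)
      + (l1 * g12^2 + g22^2 + l3 * g23^2) + l3 * (l1 * g13^2 + g23^2 + l3 * g33^2))
      = l3 * (g11^2 + g22^2 + g33^2 + 2 * g12^2 + 2 * g13^2 + 2 * g23^2)" using E2 by simp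
    then show ?thesis using l13 G1 by algebra
  qed
  then have "g12^2 = l3 * g23^2" using l3 by simp
  then show "u1 \<bullet> ((A ** A) *v u1) = l3 * (u3 \<bullet> ((A ** A) *v u3))"
    "(u2 \<bullet> ((A ** A) *v u1))^2 = l3 * (u2 \<bullet> ((A ** A) *v u3))^2"
    using G1 gs unfolding g11_def g33_def g12_def g23_def G_def by simp_all
qed

lemma KT_formula:
  assumes hA: "sym_posdef A"
  shows "A *v (refl_mat e *v (matrix_inv A *v x)) = (2 * ((matrix_inv A *v e) \<bullet> x)) *\<^sub>R (A *v e) - x"
proof -
  have sI: "transpose (matrix_inv A) = matrix_inv A" using sympd_inv_sym[OF hA] .
  have "e \<bullet> (matrix_inv A *v x) = (matrix_inv A *v e) \<bullet> x" by (rule inner_mv_sym[OF sI])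
  then show ?thesis
    by (simp add: refl_mv matrix_vector_mult_diff_distrib matrix_vector_mult_scaleR sympd_inv_mv[OF hA])
qed

lemma K_formula:
  assumes hA: "sym_posdef A"
  shows "matrix_inv A *v (refl_mat e *v (A *v y)) = (2 * ((A *v e) \<bullet> y)) *\<^sub>R (matrix_inv A *v e) - y"
proof -
  have sA: "transpose A = A" using sympd_sym[OF hA] .
  have "e \<bullet> (A *v y) = (A *v e) \<bullet> y" by (rule inner_mv_sym[OF sA])
  then show ?thesis
    by (simp add: refl_mv matrix_vector_mult_diff_distrib matrix_vector_mult_scaleR sympd_inv_mv[OF hA])
qed

lemma refl_inner: "norm e = 1 \<Longrightarrow> (refl_mat e *v x) \<bullet> (refl_mat e *v y) = x \<bullet> y"
  using orth_inner[OF refl_orth] by blast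

lemma PAP_pd:
  assumes hA: "sym_posdef A" and e: "norm e = 1"
  shows "sym_posdef (refl_mat e ** A ** refl_mat e)"
proof -
  have sA: "transpose A = A" using sympd_sym[OF hA] .
  have "transpose (refl_mat e ** A ** refl_mat e) = refl_mat e ** A ** refl_mat e"
    using sA by (simp add: matrix_transpose_mul refl_sym matrix_mul_assoc)
  moreover have "x \<bullet> ((refl_mat e ** A ** refl_mat e) *v x) > 0" if x: "x \<noteq> 0" for x
  proof -
    have "refl_mat e *v x \<noteq> 0"
    proof
      assume "refl_mat e *v x = 0"
      then have "refl_mat e *v (refl_mat e *v x) = 0" by simp
      then show False using x refl_sq[OF e] by (simp add: matrix_vector_mul_assoc)
    qed
    then have "(refl_mat e *v x) \<bullet> (A *v (refl_mat e *v x)) > 0" by (rule sympd_pos[OF hA])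
    moreover have "x \<bullet> ((refl_mat e ** A ** refl_mat e) *v x) = (refl_mat e *v x) \<bullet> (A *v (refl_mat e *v x))"
      by (simp add: matrix_vector_mul_assoc[symmetric] inner_mv_sym[OF refl_sym])
    ultimately show ?thesis by simp
  qed
  ultimately show ?thesis unfolding sym_posdef_def by blast
qed

lemma Cm_PAP:
  assumes hA: "sym_posdef A" and e: "norm e = 1"
  shows "x \<bullet> (Cm A (refl_mat e ** A ** refl_mat e) *v y)
    = (A *v (refl_mat e *v (matrix_inv A *v x))) \<bullet> (A *v (refl_mat e *v (matrix_inv A *v y)))"
  unfolding C_inner[OF hA PAP_pd[OF hA e]]
  by (simp add: matrix_vector_mul_assoc[symmetric] refl_inner[OF e])

lemma Cm_inj:
  assumes hA: "sym_posdef A" and hB: "sym_posdef B" and hB': "sym_posdef B'"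
    and eq: "Cm A B = Cm A B'"
  shows "B = B'"
proof -
  have "B ** B = B' ** B'" using BB_C[OF hA, of B] BB_C[OF hA, of B'] eq by simp
  then show ?thesis by (rule sqrt_unique[OF hB hB'])
qed


lemma star_from_data:
  assumes hA: "sym_posdef A" and hB: "sym_posdef B"
    and on: "orthonormal3 u1 u2 u3"
    and ev: "Cm A B *v u1 = l1 *\<^sub>R u1" "Cm A B *v u2 = u2" "Cm A B *v u3 = l3 *\<^sub>R u3"
    and l13: "l1 * l3 = 1" and l3p: "l3 > 0"
    and id1: "u1 \<bullet> ((A ** A) *v u1) = l3 * (u3 \<bullet> ((A ** A) *v u3))"
    and s: "s \<in> {1, -1}"
    and sc: "s * sqrt l3 * (u2 \<bullet> ((A ** A) *v u3)) = - (u2 \<bullet> ((A ** A) *v u1))"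
  shows "star_cond A B (let \<delta>1 = inverse (sqrt (2 * (u1 \<bullet> ((A ** A) *v u1)
                                      + s * sqrt l3 * (u3 \<bullet> ((A ** A) *v u1)))));
                             \<delta>3 = s * sqrt l3 * \<delta>1
                         in \<delta>1 *\<^sub>R (A *v u1) + \<delta>3 *\<^sub>R (A *v u3))"
    and "u1 \<bullet> ((A ** A) *v u1) + s * sqrt l3 * (u3 \<bullet> ((A ** A) *v u1)) > 0"
proof -
  define G where "G = A ** A"
  define r where "r = sqrt l3"
  have r2: "r^2 = l3" unfolding r_def using l3p by simp
  have rp: "r > 0" unfolding r_def using l3p by simp
  have s2: "s^2 = 1" using s by auto
  have sA: "transpose A = A" using sympd_sym[OF hA] .
  have sG: "transpose G = G" unfolding G_def using sA by (simp add: matrix_transpose_mul)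
  have oo: "u1 \<bullet> u1 = 1" "u2 \<bullet> u2 = 1" "u3 \<bullet> u3 = 1" "u1 \<bullet> u2 = 0" "u1 \<bullet> u3 = 0" "u2 \<bullet> u3 = 0"
      "u2 \<bullet> u1 = 0" "u3 \<bullet> u1 = 0" "u3 \<bullet> u2 = 0"
    using on unfolding orthonormal3_def by (auto simp: inner_commute)
  have Gsw: "u \<bullet> (G *v z) = z \<bullet> (G *v u)" for u z
    using inner_mv_sym[OF sG, of u z] by (simp add: inner_commute)
  define g11 where "g11 = u1 \<bullet> (G *v u1)"
  define g33 where "g33 = u3 \<bullet> (G *v u3)"
  define g13 where "g13 = u3 \<bullet> (G *v u1)"
  define g21 where "g21 = u2 \<bullet> (G *v u1)"
  define g23 where "g23 = u2 \<bullet> (G *v u3)"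
  have g31: "u1 \<bullet> (G *v u3) = g13" unfolding g13_def by (rule Gsw)
  define D where "D = g11 + s * r * g13"
  define E where "E = g13 + s * r * g33"
  have id1': "g11 = l3 * g33" using id1 unfolding g11_def g33_def G_def .
  have sc': "s * r * g23 = - g21" using sc unfolding g23_def g21_def G_def r_def .
  have DE: "D = s * r * E"
  proof -
    have "s * r * E = s * r * g13 + s^2 * r^2 * g33" unfolding E_def by (simp add: algebra_simps power2_eq_square)
    also have "\<dots> = s * r * g13 + g11" using s2 r2 id1' by simp
    finally show ?thesis unfolding D_def by simp
  qed
  define v where "v = u1 + (s * r) *\<^sub>R u3"
  have vnz: "v \<noteq> 0"
  proof
    assume "v = 0"
    then have "u1 \<bullet> v = 0" by simp
    then show False unfolding v_def using oo by (simp add: inner_add_right)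
  qed
  have Av: "(A *v v) \<bullet> (A *v v) = 2 * D"
  proof -
    have "(A *v v) \<bullet> (A *v v) = v \<bullet> (G *v v)"
      unfolding G_def by (simp add: matrix_vector_mul_assoc[symmetric] inner_mv_sym[OF sA])
    also have "\<dots> = g11 + s * r * (u1 \<bullet> (G *v u3)) + s * r * (u3 \<bullet> (G *v u1)) + (s * r)^2 * g33"
      unfolding v_def g11_def g33_def
      by (simp add: matrix_vector_right_distrib matrix_vector_mult_scaleR inner_add_left inner_add_right
          power2_eq_square algebra_simps)
    also have "\<dots> = 2 * D" unfolding g31 D_def g13_def[symmetric] using s2 r2 id1'
      by (simp add: power_mult_distrib algebra_simps)
    finally show ?thesis .
  qed
  have Dp: "D > 0"
  proof -
    have "A *v v \<noteq> 0" using sympd_inj[OF hA] vnz by blast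
    then have "(A *v v) \<bullet> (A *v v) > 0" by simp
    then show ?thesis using Av by simp
  qed
  define \<delta> where "\<delta> = inverse (sqrt (2 * D))"
  have dd: "\<delta>^2 * (2 * D) = 1" unfolding \<delta>_def using Dp
    by (simp add: power_inverse)
  define e where "e = \<delta> *\<^sub>R (A *v u1) + (s * r * \<delta>) *\<^sub>R (A *v u3)"
  have elet: "(let \<delta>1 = inverse (sqrt (2 * (u1 \<bullet> ((A ** A) *v u1)
                                      + s * sqrt l3 * (u3 \<bullet> ((A ** A) *v u1)))));
                             \<delta>3 = s * sqrt l3 * \<delta>1
                         in \<delta>1 *\<^sub>R (A *v u1) + \<delta>3 *\<^sub>R (A *v u3)) = e"
    unfolding e_def \<delta>_def D_def g11_def g13_def G_def r_def Let_def by simp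
  have ev': "e = \<delta> *\<^sub>R (A *v v)"
    unfolding e_def v_def by (simp add: matrix_vector_right_distrib matrix_vector_mult_scaleR scaleR_add_right mult_ac)
  have ne: "norm e = 1"
  proof -
    have "e \<bullet> e = \<delta>^2 * ((A *v v) \<bullet> (A *v v))" unfolding ev' by (simp add: power2_eq_square)
    then have "e \<bullet> e = 1" using Av dd by simp
    then show ?thesis by (simp add: norm_eq_1)
  qed
  define p where "p = matrix_inv A *v e"
  define q where "q = A *v e"
  have pv: "p = \<delta> *\<^sub>R v" unfolding p_def ev' by (simp add: matrix_vector_mult_scaleR sympd_inv_mv[OF hA])
  have qv: "q = \<delta> *\<^sub>R (G *v v)" unfolding q_def ev' G_def
    by (simp add: matrix_vector_mult_scaleR matrix_vector_mul_assoc)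
  have p1: "p \<bullet> u1 = \<delta>" and p2: "p \<bullet> u2 = 0" and p3: "p \<bullet> u3 = \<delta> * s * r"
    unfolding pv v_def using oo by (simp_all add: inner_add_left)
  have Gv: "u \<bullet> (G *v v) = u \<bullet> (G *v u1) + s * r * (u \<bullet> (G *v u3))" for u
    unfolding v_def by (simp add: matrix_vector_right_distrib matrix_vector_mult_scaleR inner_add_right)
  have q1: "q \<bullet> u1 = \<delta> * D" unfolding qv D_def using Gv[of u1] g31
    by (simp add: inner_commute g11_def)
  have q2: "q \<bullet> u2 = 0" unfolding qv using Gv[of u2] sc' by (simp add: inner_commute g21_def g23_def)
  have q3: "q \<bullet> u3 = \<delta> * E" unfolding qv E_def using Gv[of u3]
    by (simp add: inner_commute g13_def g33_def)
  have qq: "q \<bullet> q = \<delta>^2 * (D^2 + E^2)"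
    using parseval[OF on, of q q] q1 q2 q3 by (simp add: inner_commute power2_eq_square algebra_simps)
  have KT: "A *v (refl_mat e *v (matrix_inv A *v x)) = (2 * (p \<bullet> x)) *\<^sub>R q - x" for x
    unfolding p_def q_def by (rule KT_formula[OF hA])
  have F: "x \<bullet> (Cm A (refl_mat e ** A ** refl_mat e) *v y) =
      4 * (p \<bullet> x) * (p \<bullet> y) * (q \<bullet> q) - 2 * (p \<bullet> x) * (q \<bullet> y) - 2 * (p \<bullet> y) * (q \<bullet> x) + x \<bullet> y" for x y
    unfolding Cm_PAP[OF hA ne] KT
    by (simp add: inner_diff_left inner_diff_right inner_commute algebra_simps)
  have R11: "4 * \<delta> * \<delta> * (\<delta>^2 * (D^2 + E^2)) - 2 * \<delta> * (\<delta> * D) - 2 * \<delta> * (\<delta> * D) + 1 = l1"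
    using dd r2 l13 s2 DE by algebra
  have R13: "4 * \<delta> * (\<delta> * s * r) * (\<delta>^2 * (D^2 + E^2)) - 2 * \<delta> * (\<delta> * E) - 2 * (\<delta> * s * r) * (\<delta> * D) = 0"
    using dd r2 l13 s2 DE by algebra
  have R33: "4 * (\<delta> * s * r) * (\<delta> * s * r) * (\<delta>^2 * (D^2 + E^2)) - 2 * (\<delta> * s * r) * (\<delta> * E) - 2 * (\<delta> * s * r) * (\<delta> * E) + 1 = l3"
    using dd r2 l13 s2 DE by algebra
  have CC: "Cm A B = Cm A (refl_mat e ** A ** refl_mat e)"
  proof (rule mat_eq_basis[OF on])
    fix x y assume x: "x \<in> {u1, u2, u3}" and y: "y \<in> {u1, u2, u3}"
    show "x \<bullet> (Cm A B *v y) = x \<bullet> (Cm A (refl_mat e ** A ** refl_mat e) *v y)"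
      unfolding F using x y ev oo p1 p2 p3 q1 q2 q3 qq R11 R13 R33
      by (auto simp: algebra_simps)
  qed
  have "B = refl_mat e ** A ** refl_mat e"
    by (rule Cm_inj[OF hA hB PAP_pd[OF hA ne] CC])
  then show "star_cond A B (let \<delta>1 = inverse (sqrt (2 * (u1 \<bullet> ((A ** A) *v u1)
                                      + s * sqrt l3 * (u3 \<bullet> ((A ** A) *v u1)))));
                             \<delta>3 = s * sqrt l3 * \<delta>1
                         in \<delta>1 *\<^sub>R (A *v u1) + \<delta>3 *\<^sub>R (A *v u3))"
    unfolding elet star_cond_def using ne by simp
  show "u1 \<bullet> ((A ** A) *v u1) + s * sqrt l3 * (u3 \<bullet> ((A ** A) *v u1)) > 0"
    using Dp unfolding D_def g11_def g13_def G_def r_def .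
qed


lemma star_form:
  assumes hA: "sym_posdef A" and hB: "sym_posdef B"
    and on: "orthonormal3 u1 u2 u3"
    and ev: "Cm A B *v u1 = l1 *\<^sub>R u1" "Cm A B *v u2 = u2" "Cm A B *v u3 = l3 *\<^sub>R u3"
    and l13: "l1 * l3 = 1" and l3g: "l3 > 1"
    and st: "star_cond A B e"
  shows "\<exists>\<sigma> s. e = \<sigma> *\<^sub>R (let \<delta>1 = inverse (sqrt (2 * (u1 \<bullet> ((A ** A) *v u1)
                                      + s * sqrt l3 * (u3 \<bullet> ((A ** A) *v u1)))));
                             \<delta>3 = s * sqrt l3 * \<delta>1
                         in \<delta>1 *\<^sub>R (A *v u1) + \<delta>3 *\<^sub>R (A *v u3))
     \<and> \<sigma> \<in> {1, -1} \<and> s \<in> {1, -1}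
     \<and> s * sqrt l3 * (u2 \<bullet> ((A ** A) *v u3)) = - (u2 \<bullet> ((A ** A) *v u1))"
proof -
  have ne: "norm e = 1" and hBe: "B = refl_mat e ** A ** refl_mat e" using st unfolding star_cond_def by auto
  define G where "G = A ** A"
  define r where "r = sqrt l3"
  have r2: "r^2 = l3" unfolding r_def using l3g by simp
  have rp: "r > 0" unfolding r_def using l3g by simp
  have l1lt: "l1 < 1"
  proof -
    have "l1 = 1 / l3" using l13 l3g by (simp add: field_simps)
    then show ?thesis using l3g by simp
  qed
  have sA: "transpose A = A" using sympd_sym[OF hA] .
  have sI: "transpose (matrix_inv A) = matrix_inv A" using sympd_inv_sym[OF hA] .
  have sG: "transpose G = G" unfolding G_def using sA by (simp add: matrix_transpose_mul)
  have sC: "transpose (Cm A B) = Cm A B" by (rule C_sym[OF hA hB])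
  have oo: "u1 \<bullet> u1 = 1" "u2 \<bullet> u2 = 1" "u3 \<bullet> u3 = 1" "u1 \<bullet> u2 = 0" "u1 \<bullet> u3 = 0" "u2 \<bullet> u3 = 0"
      "u2 \<bullet> u1 = 0" "u3 \<bullet> u1 = 0" "u3 \<bullet> u2 = 0"
    using on unfolding orthonormal3_def by (auto simp: inner_commute)
  have ee: "e \<bullet> e = 1" using ne by (simp add: dot_square_norm)
  define p where "p = matrix_inv A *v e"
  define q where "q = A *v e"
  have Ap: "A *v p = e" unfolding p_def using sympd_inv_mv[OF hA] by simp
  have pq: "p \<bullet> q = 1"
  proof -
    have "p \<bullet> q = e \<bullet> (matrix_inv A *v (A *v e))" unfolding p_def q_def
      using inner_mv_sym[OF sI, of e "A *v e"] by simp
    then show ?thesis using ee sympd_inv_mv[OF hA] by simp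
  qed
  define k where "k y = (2 * (q \<bullet> y)) *\<^sub>R p - y" for y
  define k' where "k' x = (2 * (p \<bullet> x)) *\<^sub>R q - x" for x
  have kk: "k (k y) = y" for y
    unfolding k_def using pq by (simp add: inner_diff_right algebra_simps inner_commute)
  have kk': "k' (k' x) = x" for x
    unfolding k'_def using pq by (simp add: inner_diff_right algebra_simps inner_commute)
  have kl: "k (c *\<^sub>R y) = c *\<^sub>R k y" for c y unfolding k_def by (simp add: algebra_simps)
  have kl': "k' (c *\<^sub>R y) = c *\<^sub>R k' y" for c y unfolding k'_def by (simp add: algebra_simps)
  have kadj: "(k y) \<bullet> z = y \<bullet> (k' z)" for y z
    unfolding k_def k'_def by (simp add: inner_diff_left inner_diff_right inner_commute algebra_simps)
  have Cx: "Cm A B *v x = k (k' x)" for x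
  proof -
    have PP: "refl_mat e *v (refl_mat e *v z) = z" for z
      using refl_sq[OF ne] by (simp add: matrix_vector_mul_assoc)
    have "Cm A B *v x = matrix_inv A *v (refl_mat e *v (A *v (A *v (refl_mat e *v (matrix_inv A *v x)))))"
      unfolding Cm_def hBe by (simp add: matrix_vector_mul_assoc[symmetric] PP)
    also have "\<dots> = k (k' x)"
      unfolding k_def k'_def p_def q_def K_formula[OF hA] KT_formula[OF hA] ..
    finally show ?thesis .
  qed
  have Cl: "u \<bullet> (Cm A B *v z) = (Cm A B *v u) \<bullet> z" for u z by (rule inner_mv_sym[OF sC])
  define w where "w = k u1"
  have k'u1: "k' u1 = l1 *\<^sub>R w"
  proof -
    have "k (k' u1) = l1 *\<^sub>R u1" using Cx[of u1] ev(1) by simp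
    then have "k (k (k' u1)) = k (l1 *\<^sub>R u1)" by simp
    then show ?thesis unfolding kk kl w_def .
  qed
  have l1nz: "l1 \<noteq> 0" using l13 by auto
  have k'w: "k' w = l3 *\<^sub>R u1"
  proof -
    have "k' (l1 *\<^sub>R w) = u1" using kk'[of u1] k'u1 by simp
    then have "l1 *\<^sub>R k' w = u1" unfolding kl' .
    then have "l3 *\<^sub>R (l1 *\<^sub>R k' w) = l3 *\<^sub>R u1" by simp
    then show ?thesis using l13 by (simp add: mult.commute)
  qed
  have Cw: "Cm A B *v w = l3 *\<^sub>R w"
  proof -
    have "Cm A B *v w = k (k' w)" by (rule Cx)
    also have "\<dots> = k (l3 *\<^sub>R u1)" by (simp only: k'w)
    also have "\<dots> = l3 *\<^sub>R w" by (simp only: kl w_def)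
    finally show ?thesis .
  qed
  have ww: "w \<bullet> w = l3" using kadj[of u1 w] unfolding k'w w_def[symmetric] using oo by simp
  have wc: "(li - l3) * (u \<bullet> w) = 0" if "Cm A B *v u = li *\<^sub>R u" for u li
  proof -
    have "u \<bullet> (Cm A B *v w) = li * (u \<bullet> w)" unfolding Cl that by simp
    moreover have "u \<bullet> (Cm A B *v w) = l3 * (u \<bullet> w)" unfolding Cw by simp
    ultimately show ?thesis by (auto simp: algebra_simps)
  qed
  have w1: "u1 \<bullet> w = 0" using wc[OF ev(1)] l1lt l3g by simp
  have w2: "u2 \<bullet> w = 0" using wc[of u2 1] ev(2) l3g by simp
  have w3sq: "(u3 \<bullet> w)^2 = l3" using parseval[OF on, of w w] w1 w2 ww by (simp add: power2_eq_square)
  define t where "t = (u3 \<bullet> w) / r"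
  have w3: "u3 \<bullet> w = t * r" unfolding t_def using rp by simp
  have t2: "t^2 = 1" using w3sq r2 rp l3g unfolding w3 by (auto simp: power_mult_distrib)
  have t: "t \<in> {1, -1}" using t2 by (auto simp: power2_eq_1_iff)
  have wv: "w = (t * r) *\<^sub>R u3"
    by (rule vec_eq_basis[OF on]) (use w1 w2 w3 oo in simp_all)
  define a1 where "a1 = q \<bullet> u1"
  have a1p: "2 * a1 * (p \<bullet> u1) = 1"
    using w1 unfolding w_def k_def a1_def using oo by (simp add: inner_diff_right inner_commute)
  have a1nz: "a1 \<noteq> 0" using a1p by auto
  have pform: "p = (1 / (2 * a1)) *\<^sub>R (u1 + (t * r) *\<^sub>R u3)"
  proof -
    have "w = (2 * a1) *\<^sub>R p - u1" unfolding w_def k_def a1_def by (simp add: inner_commute)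
    then have h: "(2 * a1) *\<^sub>R p = u1 + (t * r) *\<^sub>R u3" using wv by (simp add: algebra_simps)
    have "p = (1 / (2 * a1)) *\<^sub>R ((2 * a1) *\<^sub>R p)" using a1nz by simp
    then show ?thesis unfolding h .
  qed
  define z where "z = k u2"
  have k'u2: "k' u2 = z"
  proof -
    have "k (k' u2) = u2" using Cx[of u2] ev(2) by simp
    then have "k (k (k' u2)) = k u2" by simp
    then show ?thesis unfolding kk z_def .
  qed
  have Cz: "Cm A B *v z = z"
  proof -
    have "k' z = u2" using kk'[of u2] k'u2 by simp
    then show ?thesis unfolding Cx z_def by simp
  qed
  have "u1 \<bullet> z = 0"
  proof -
    have "u1 \<bullet> (Cm A B *v z) = l1 * (u1 \<bullet> z)" unfolding Cl ev(1) by simp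
    then have "(l1 - 1) * (u1 \<bullet> z) = 0" unfolding Cz by (simp add: algebra_simps)
    then show ?thesis using l1lt by simp
  qed
  then have "2 * (q \<bullet> u2) * (p \<bullet> u1) = 0"
    unfolding z_def k_def using oo by (simp add: inner_diff_right inner_commute)
  then have q2: "q \<bullet> u2 = 0" using a1p by auto
  have qG: "q = G *v p" unfolding q_def G_def using Ap by (simp add: matrix_vector_mul_assoc[symmetric])
  have Gsw: "u \<bullet> (G *v z) = z \<bullet> (G *v u)" for u z
    using inner_mv_sym[OF sG, of u z] by (simp add: inner_commute)
  have qexp: "u \<bullet> q = (1 / (2 * a1)) * (u \<bullet> (G *v u1) + t * r * (u \<bullet> (G *v u3)))" for u
    unfolding qG pform by (simp add: matrix_vector_right_distrib matrix_vector_mult_scaleR inner_add_right)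
  have sc: "t * r * (u2 \<bullet> (G *v u3)) = - (u2 \<bullet> (G *v u1))"
  proof -
    have "(1 / (2 * a1)) * (u2 \<bullet> (G *v u1) + t * r * (u2 \<bullet> (G *v u3))) = 0"
      using qexp[of u2] q2 by (simp add: inner_commute)
    then show ?thesis using a1nz by simp
  qed
  define D where "D = u1 \<bullet> (G *v u1) + t * r * (u3 \<bullet> (G *v u1))"
  have D: "D = 2 * a1^2"
  proof -
    have "a1 = (1 / (2 * a1)) * D" using qexp[of u1] unfolding a1_def D_def
      by (simp add: inner_commute Gsw[of u1 u3])
    then have "2 * a1 * a1 = D" using a1nz by (simp add: field_simps)
    then show ?thesis by (simp add: power2_eq_square)
  qed
  define \<delta> where "\<delta> = inverse (sqrt (2 * D))"
  have dl: "\<delta> = 1 / (2 * \<bar>a1\<bar>)"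
  proof -
    have h: "2 * D = (2 * \<bar>a1\<bar>)^2" unfolding D by (simp add: power2_eq_square)
    have "sqrt (2 * D) = \<bar>2 * \<bar>a1\<bar>\<bar>" unfolding h by (rule real_sqrt_abs)
    then have s2: "sqrt (2 * D) = 2 * \<bar>a1\<bar>" by simp
    show ?thesis unfolding \<delta>_def s2 by (simp add: inverse_eq_divide)
  qed
  define \<sigma> where "\<sigma> = sgn a1"
  have sig: "\<sigma> \<in> {1, -1}" unfolding \<sigma>_def using a1nz by (auto simp: sgn_if)
  have sd: "1 / (2 * a1) = \<sigma> * \<delta>"
  proof (cases "a1 > 0")
    case True then show ?thesis unfolding \<sigma>_def dl by simp
  next
    case False then have "a1 < 0" using a1nz by simp
    then show ?thesis unfolding \<sigma>_def dl by simp
  qed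
  have "e = A *v p" using Ap by simp
  also have "\<dots> = (1 / (2 * a1)) *\<^sub>R (A *v u1 + (t * r) *\<^sub>R (A *v u3))"
    unfolding pform by (simp add: matrix_vector_right_distrib matrix_vector_mult_scaleR)
  also have "\<dots> = \<sigma> *\<^sub>R (\<delta> *\<^sub>R (A *v u1) + (t * r * \<delta>) *\<^sub>R (A *v u3))"
    unfolding sd by (simp add: scaleR_add_right mult_ac)
  finally have eform: "e = \<sigma> *\<^sub>R (\<delta> *\<^sub>R (A *v u1) + (t * r * \<delta>) *\<^sub>R (A *v u3))" .
  have lt: "(let \<delta>1 = inverse (sqrt (2 * (u1 \<bullet> ((A ** A) *v u1)
                                      + t * sqrt l3 * (u3 \<bullet> ((A ** A) *v u1)))));
                             \<delta>3 = t * sqrt l3 * \<delta>1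
                         in \<delta>1 *\<^sub>R (A *v u1) + \<delta>3 *\<^sub>R (A *v u3))
     = \<delta> *\<^sub>R (A *v u1) + (t * r * \<delta>) *\<^sub>R (A *v u3)"
    unfolding Let_def \<delta>_def D_def G_def r_def by (rule refl)
  have sc': "t * sqrt l3 * (u2 \<bullet> ((A ** A) *v u3)) = - (u2 \<bullet> ((A ** A) *v u1))"
    using sc unfolding G_def r_def .
  show ?thesis
    apply (rule exI[of _ \<sigma>], rule exI[of _ t])
    unfolding lt using eform sig t sc' by blast
qed

lemma C_outer:
  assumes on: "orthonormal3 u1 u2 u3"
    and ev: "Cm A B *v u1 = l1 *\<^sub>R u1" "Cm A B *v u2 = u2" "Cm A B *v u3 = l3 *\<^sub>R u3"
  shows "matrix_inv A ** (B ** B) ** matrix_inv A = l1 *\<^sub>R outer u1 u1 + outer u2 u2 + l3 *\<^sub>R outer u3 u3"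
  unfolding Cm_def[symmetric]
proof (rule mat_eq_mv)
  fix x
  have "Cm A B *v x = Cm A B *v ((u1 \<bullet> x) *\<^sub>R u1 + (u2 \<bullet> x) *\<^sub>R u2 + (u3 \<bullet> x) *\<^sub>R u3)"
    using orthonormal_expand[OF on, of x] by simp
  also have "\<dots> = (l1 *\<^sub>R outer u1 u1 + outer u2 u2 + l3 *\<^sub>R outer u3 u3) *v x"
    by (simp add: matrix_vector_right_distrib matrix_vector_mult_scaleR ev matrix_vector_mult_add_rdistrib
        smult_mv outer_mv mult.commute)
  finally show "Cm A B *v x = (l1 *\<^sub>R outer u1 u1 + outer u2 u2 + l3 *\<^sub>R outer u3 u3) *v x" .
qed

lemma Cm_AA: assumes hA: "sym_posdef A" shows "Cm A A = mat 1"
proof -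
  have "Cm A A = (matrix_inv A ** A) ** (A ** matrix_inv A)"
    unfolding Cm_def by (simp add: matrix_mul_assoc)
  then show ?thesis using sympd_inv[OF hA] by (simp add: matrix_mul_lid)
qed

lemma unit_case:
  assumes hA: "sym_posdef A" and hB: "sym_posdef B" and on: "orthonormal3 u1 u2 u3"
    and ev: "Cm A B *v u1 = u1" "Cm A B *v u2 = u2" "Cm A B *v u3 = u3"
  shows "B = A"
proof -
  have "Cm A B = Cm A A"
    unfolding Cm_AA[OF hA] by (rule mat_eq_basis[OF on]) (use ev in auto)
  then show ?thesis by (rule Cm_inj[OF hA hB hA])
qed

lemma eigvec_star:
  assumes hA: "sym_posdef A"
  shows "\<exists>e c. norm e = 1 \<and> A *v e = c *\<^sub>R e \<and> star_cond A A e"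
proof -
  obtain e1 e2 e3 l1 l2 l3 where on: "orthonormal3 e1 e2 e3"
    and ev: "A *v e1 = l1 *\<^sub>R e1" "A *v e2 = l2 *\<^sub>R e2" "A *v e3 = l3 *\<^sub>R e3"
    and "l1 \<le> l2" "l2 \<le> l3"
    by (rule spectral3[OF sympd_sym[OF hA]])
  have ne: "norm e1 = 1" using on unfolding orthonormal3_def by (simp add: norm_eq_1)
  have ee: "e1 \<bullet> e1 = 1" using on unfolding orthonormal3_def by simp
  have sA: "transpose A = A" using sympd_sym[OF hA] .
  have "refl_mat e1 ** A ** refl_mat e1 = A"
  proof (rule mat_eq_mv)
    fix x
    have ax: "e1 \<bullet> (A *v x) = l1 * (e1 \<bullet> x)" using inner_mv_sym[OF sA, of e1 x] ev(1) by simp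
    have s1: "A *v (refl_mat e1 *v x) = (2 * (e1 \<bullet> x) * l1) *\<^sub>R e1 - A *v x"
      by (simp add: refl_mv matrix_vector_mult_diff_distrib matrix_vector_mult_scaleR ev(1))
    have s2: "e1 \<bullet> (A *v (refl_mat e1 *v x)) = l1 * (e1 \<bullet> x)"
      unfolding s1 using ee ax by (simp add: inner_diff_right algebra_simps)
    have "(refl_mat e1 ** A ** refl_mat e1) *v x = refl_mat e1 *v (A *v (refl_mat e1 *v x))"
      by (simp add: matrix_vector_mul_assoc matrix_mul_assoc)
    also have "\<dots> = (2 * (l1 * (e1 \<bullet> x))) *\<^sub>R e1 - A *v (refl_mat e1 *v x)"
      by (simp only: refl_mv[of e1 "A *v (refl_mat e1 *v x)"] s2)
    also have "\<dots> = A *v x" unfolding s1 by (simp add: mult_ac)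
    finally show "(refl_mat e1 ** A ** refl_mat e1) *v x = A *v x" .
  qed
  then show ?thesis using ne ev(1) unfolding star_cond_def by auto
qed

lemma basis_G:
  assumes hA: "sym_posdef A"
  obtains e1 e2 e3 where "orthonormal3 e1 e2 e3"
    "e1 \<bullet> ((A ** A) *v e1) = 1 * (e3 \<bullet> ((A ** A) *v e3))"
    "(e2 \<bullet> ((A ** A) *v e1))\<^sup>2 = 1 * (e2 \<bullet> ((A ** A) *v e3))\<^sup>2"
proof -
  define G where "G = A ** A"
  have sG: "transpose G = G" unfolding G_def using sympd_sym[OF hA] by (simp add: matrix_transpose_mul)
  obtain v1 v2 v3 a1 a2 a3 where on: "orthonormal3 v1 v2 v3"
    and ev: "G *v v1 = a1 *\<^sub>R v1" "G *v v2 = a2 *\<^sub>R v2" "G *v v3 = a3 *\<^sub>R v3"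
    and "a1 \<le> a2" "a2 \<le> a3"
    by (rule spectral3[OF sG])
  have oo: "v1 \<bullet> v1 = 1" "v2 \<bullet> v2 = 1" "v3 \<bullet> v3 = 1" "v1 \<bullet> v2 = 0" "v1 \<bullet> v3 = 0" "v2 \<bullet> v3 = 0"
      "v2 \<bullet> v1 = 0" "v3 \<bullet> v1 = 0" "v3 \<bullet> v2 = 0"
    using on unfolding orthonormal3_def by (auto simp: inner_commute)
  define c where "c = sqrt (1/2)"
  have c2: "c * c = 1/2" unfolding c_def by (simp add: real_sqrt_mult[symmetric])
  define e1 where "e1 = c *\<^sub>R (v1 + v3)"
  define e3 where "e3 = c *\<^sub>R (v1 - v3)"
  have "orthonormal3 e1 v2 e3"
    unfolding orthonormal3_def e1_def e3_def using oo c2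
    by (simp add: inner_add_left inner_add_right inner_diff_left inner_diff_right algebra_simps)
  moreover have "e1 \<bullet> (G *v e1) = 1 * (e3 \<bullet> (G *v e3))"
    unfolding e1_def e3_def using oo
    by (simp add: matrix_vector_right_distrib matrix_vector_mult_diff_distrib matrix_vector_mult_scaleR ev
        inner_add_left inner_add_right inner_diff_left inner_diff_right algebra_simps)
  moreover have "(v2 \<bullet> (G *v e1))\<^sup>2 = 1 * (v2 \<bullet> (G *v e3))\<^sup>2"
    unfolding e1_def e3_def using oo
    by (simp add: matrix_vector_right_distrib matrix_vector_mult_diff_distrib matrix_vector_mult_scaleR ev
        inner_add_left inner_add_right inner_diff_left inner_diff_right algebra_simps)
  ultimately show ?thesis using that unfolding G_def by blast
qed

lemma choose_s:
  assumes h: "(g12::real)^2 = l3 * g23^2" and l3: "l3 > 0"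
  obtains s where "s \<in> {1, -1}" "s * sqrt l3 * g23 = - g12"
proof (cases "g23 = 0")
  case True
  then have "g12 = 0" using h by simp
  then show ?thesis using that[of 1] True by simp
next
  case False
  define s where "s = - g12 / (sqrt l3 * g23)"
  have r: "sqrt l3 > 0" using l3 by simp
  have sc: "s * sqrt l3 * g23 = - g12" unfolding s_def using False r by simp
  have "(s * sqrt l3 * g23)^2 = g12^2" unfolding sc by simp
  then have "s^2 * (l3 * g23^2) = g12^2" using l3 by (simp add: power_mult_distrib)
  then have "s^2 * g12^2 = g12^2" using h by simp
  moreover have "g12 \<noteq> 0"
  proof
    assume "g12 = 0"
    then have "l3 * g23^2 = 0" using h by simp
    then show False using l3 False by simp
  qed
  ultimately have "s^2 = 1" by simp
  then have "s \<in> {1, -1}" by (auto simp: power2_eq_1_iff)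
  then show ?thesis using that sc by blast
qed

lemma star_scale:
  assumes "star_cond A B x" "\<sigma> \<in> {1, -1::real}"
  shows "star_cond A B (\<sigma> *\<^sub>R x)"
  using assms unfolding star_cond_def by (auto simp: refl_neg)

lemma part3_lemma:
  assumes hA: "sym_posdef A" and hB: "sym_posdef B"
    and hR: "in_O3 R" and hBR: "B = R ** A ** transpose R"
    and r1: "rank_one_connected A B"
  shows "\<exists>e1 e2 e3 \<mu>1 \<mu>3. orthonormal3 e1 e2 e3
          \<and> matrix_inv A ** (B ** B) ** matrix_inv A
              = \<mu>1 *\<^sub>R outer e1 e1 + outer e2 e2 + \<mu>3 *\<^sub>R outer e3 e3
          \<and> 0 < \<mu>1 \<and> \<mu>1 \<le> 1 \<and> 1 \<le> \<mu>3
          \<and> \<mu>1 * \<mu>3 = 1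
          \<and> e1 \<bullet> ((A ** A) *v e1) = \<mu>3 * (e3 \<bullet> ((A ** A) *v e3))
          \<and> (e2 \<bullet> ((A ** A) *v e1))\<^sup>2 = \<mu>3 * (e2 \<bullet> ((A ** A) *v e3))\<^sup>2
          \<and> (\<mu>3 > 1 \<longrightarrow>
               {e. star_cond A B e} =
               {\<sigma> *\<^sub>R ((let \<delta>1 = inverse (sqrt (2 * (e1 \<bullet> ((A ** A) *v e1)
                                      + s * sqrt \<mu>3 * (e3 \<bullet> ((A ** A) *v e1)))));
                             \<delta>3 = s * sqrt \<mu>3 * \<delta>1
                         in \<delta>1 *\<^sub>R (A *v e1) + \<delta>3 *\<^sub>R (A *v e3))) | \<sigma> s.
                  \<sigma> \<in> {1, -1} \<and> s \<in> {1, -1}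
                  \<and> s * sqrt \<mu>3 * (e2 \<bullet> ((A ** A) *v e3)) = - (e2 \<bullet> ((A ** A) *v e1))})
          \<and> (\<mu>3 = 1 \<longrightarrow> B = A \<and>
               (\<exists>e c. norm e = 1 \<and> A *v e = c *\<^sub>R e \<and> star_cond A B e))"
proof -
  obtain u1 u2 u3 l1 l3 where on: "orthonormal3 u1 u2 u3"
    and ev: "Cm A B *v u1 = l1 *\<^sub>R u1" "Cm A B *v u2 = u2" "Cm A B *v u3 = l3 *\<^sub>R u3"
    and l: "0 < l1" "l1 \<le> 1" "1 \<le> l3" "l1 * l3 = 1"
    by (rule eig_main[OF hA hB hR hBR r1])
  show ?thesis
  proof (cases "l3 = 1")
    case True
    then have "l1 = 1" using l by simp
    then have BA: "B = A" using unit_case[OF hA hB on] ev True by simp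
    obtain e1 e2 e3 where on': "orthonormal3 e1 e2 e3"
      and i1: "e1 \<bullet> ((A ** A) *v e1) = 1 * (e3 \<bullet> ((A ** A) *v e3))"
      and i2: "(e2 \<bullet> ((A ** A) *v e1))\<^sup>2 = 1 * (e2 \<bullet> ((A ** A) *v e3))\<^sup>2"
      by (rule basis_G[OF hA])
    have CI: "Cm A B *v x = x" for x unfolding BA Cm_AA[OF hA] by simp
    have M: "matrix_inv A ** (B ** B) ** matrix_inv A = 1 *\<^sub>R outer e1 e1 + outer e2 e2 + 1 *\<^sub>R outer e3 e3"
      by (rule C_outer[OF on']) (simp_all add: CI)
    have EV: "\<exists>e c. norm e = 1 \<and> A *v e = c *\<^sub>R e \<and> star_cond A B e"
      using eigvec_star[OF hA] unfolding BA .
    show ?thesis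
      apply (rule exI[of _ e1], rule exI[of _ e2], rule exI[of _ e3], rule exI[of _ 1], rule exI[of _ 1])
      using on' M i1 i2 BA EV by simp
  next
    case False
    then have l3g: "l3 > 1" using l by simp
    have ids: "u1 \<bullet> ((A ** A) *v u1) = l3 * (u3 \<bullet> ((A ** A) *v u3))"
      "(u2 \<bullet> ((A ** A) *v u1))^2 = l3 * (u2 \<bullet> ((A ** A) *v u3))^2"
      using g_ids[OF hA hB hR hBR on ev l(4) False] by auto
    have M: "matrix_inv A ** (B ** B) ** matrix_inv A = l1 *\<^sub>R outer u1 u1 + outer u2 u2 + l3 *\<^sub>R outer u3 u3"
      by (rule C_outer[OF on ev])
    have l3p: "l3 > 0" using l3g by simp
    have SE: "{e. star_cond A B e} =
               {\<sigma> *\<^sub>R ((let \<delta>1 = inverse (sqrt (2 * (u1 \<bullet> ((A ** A) *v u1)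
                                      + s * sqrt l3 * (u3 \<bullet> ((A ** A) *v u1)))));
                             \<delta>3 = s * sqrt l3 * \<delta>1
                         in \<delta>1 *\<^sub>R (A *v u1) + \<delta>3 *\<^sub>R (A *v u3))) | \<sigma> s.
                  \<sigma> \<in> {1, -1} \<and> s \<in> {1, -1}
                  \<and> s * sqrt l3 * (u2 \<bullet> ((A ** A) *v u3)) = - (u2 \<bullet> ((A ** A) *v u1))}"
    proof (rule set_eqI, rule iffI)
      fix x assume "x \<in> {e. star_cond A B e}"
      then have "star_cond A B x" by simp
      from star_form[OF hA hB on ev l(4) l3g this] show "x \<in> {\<sigma> *\<^sub>R ((let \<delta>1 = inverse (sqrt (2 * (u1 \<bullet> ((A ** A) *v u1)
                                      + s * sqrt l3 * (u3 \<bullet> ((A ** A) *v u1)))));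
                             \<delta>3 = s * sqrt l3 * \<delta>1
                         in \<delta>1 *\<^sub>R (A *v u1) + \<delta>3 *\<^sub>R (A *v u3))) | \<sigma> s.
                  \<sigma> \<in> {1, -1} \<and> s \<in> {1, -1}
                  \<and> s * sqrt l3 * (u2 \<bullet> ((A ** A) *v u3)) = - (u2 \<bullet> ((A ** A) *v u1))}"
        by blast
    next
      fix x assume "x \<in> {\<sigma> *\<^sub>R ((let \<delta>1 = inverse (sqrt (2 * (u1 \<bullet> ((A ** A) *v u1)
                                      + s * sqrt l3 * (u3 \<bullet> ((A ** A) *v u1)))));
                             \<delta>3 = s * sqrt l3 * \<delta>1
                         in \<delta>1 *\<^sub>R (A *v u1) + \<delta>3 *\<^sub>R (A *v u3))) | \<sigma> s.
                  \<sigma> \<in> {1, -1} \<and> s \<in> {1, -1}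
                  \<and> s * sqrt l3 * (u2 \<bullet> ((A ** A) *v u3)) = - (u2 \<bullet> ((A ** A) *v u1))}"
      then obtain \<sigma> s where x: "x = \<sigma> *\<^sub>R ((let \<delta>1 = inverse (sqrt (2 * (u1 \<bullet> ((A ** A) *v u1)
                                      + s * sqrt l3 * (u3 \<bullet> ((A ** A) *v u1)))));
                             \<delta>3 = s * sqrt l3 * \<delta>1
                         in \<delta>1 *\<^sub>R (A *v u1) + \<delta>3 *\<^sub>R (A *v u3)))"
        and sg: "\<sigma> \<in> {1, -1}" and s: "s \<in> {1, -1}"
        and sc: "s * sqrt l3 * (u2 \<bullet> ((A ** A) *v u3)) = - (u2 \<bullet> ((A ** A) *v u1))"
        by blast
      show "x \<in> {e. star_cond A B e}"
        unfolding x using star_scale[OF star_from_data(1)[OF hA hB on ev l(4) l3p ids(1) s sc] sg] by simp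
    qed
    show ?thesis
      apply (rule exI[of _ u1], rule exI[of _ u2], rule exI[of _ u3], rule exI[of _ l1], rule exI[of _ l3])
      using on M l ids SE False by simp
  qed
qed

theorem proposition3:
  fixes A B R :: "real^3^3"
  assumes hA: "sym_posdef A" and hB: "sym_posdef B"
    and hR: "in_O3 R" and hBR: "B = R ** A ** transpose R"
  shows "(rank_one_connected A B \<longrightarrow> (\<exists>e. star_cond A B e))
    \<and> ((\<exists>e. star_cond A B e) \<longrightarrow> rank_one_connected A B)
    \<and> (rank_one_connected A B \<longrightarrow>
        (\<exists>e1 e2 e3 \<mu>1 \<mu>3. orthonormal3 e1 e2 e3
          \<and> matrix_inv A ** (B ** B) ** matrix_inv A
              = \<mu>1 *\<^sub>R outer e1 e1 + outer e2 e2 + \<mu>3 *\<^sub>R outer e3 e3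
          \<and> 0 < \<mu>1 \<and> \<mu>1 \<le> 1 \<and> 1 \<le> \<mu>3
          \<and> \<mu>1 * \<mu>3 = 1
          \<and> e1 \<bullet> ((A ** A) *v e1) = \<mu>3 * (e3 \<bullet> ((A ** A) *v e3))
          \<and> (e2 \<bullet> ((A ** A) *v e1))\<^sup>2 = \<mu>3 * (e2 \<bullet> ((A ** A) *v e3))\<^sup>2
          \<and> (\<mu>3 > 1 \<longrightarrow>
               {e. star_cond A B e} =
               {\<sigma> *\<^sub>R ((let \<delta>1 = inverse (sqrt (2 * (e1 \<bullet> ((A ** A) *v e1)
                                      + s * sqrt \<mu>3 * (e3 \<bullet> ((A ** A) *v e1)))));
                             \<delta>3 = s * sqrt \<mu>3 * \<delta>1
                         in \<delta>1 *\<^sub>R (A *v e1) + \<delta>3 *\<^sub>R (A *v e3))) | \<sigma> s.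
                  \<sigma> \<in> {1, -1} \<and> s \<in> {1, -1}
                  \<and> s * sqrt \<mu>3 * (e2 \<bullet> ((A ** A) *v e3)) = - (e2 \<bullet> ((A ** A) *v e1))})
          \<and> (\<mu>3 = 1 \<longrightarrow> B = A \<and>
               (\<exists>e c. norm e = 1 \<and> A *v e = c *\<^sub>R e \<and> star_cond A B e))))"
proof -
  have part1: "rank_one_connected A B \<longrightarrow> (\<exists>e. star_cond A B e)"
  proof
    assume r1: "rank_one_connected A B"
    obtain u1 u2 u3 l1 l3 where on: "orthonormal3 u1 u2 u3"
      and ev: "Cm A B *v u1 = l1 *\<^sub>R u1" "Cm A B *v u2 = u2" "Cm A B *v u3 = l3 *\<^sub>R u3"
      and l: "0 < l1" "l1 \<le> 1" "1 \<le> l3" "l1 * l3 = 1"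
      by (rule eig_main[OF hA hB hR hBR r1])
    show "\<exists>e. star_cond A B e"
    proof (cases "l3 = 1")
      case True
      then have "l1 = 1" using l by simp
      then have "B = A" using unit_case[OF hA hB on] ev True by simp
      then show ?thesis using eigvec_star[OF hA] by blast
    next
      case False
      have ids: "u1 \<bullet> ((A ** A) *v u1) = l3 * (u3 \<bullet> ((A ** A) *v u3))"
        "(u2 \<bullet> ((A ** A) *v u1))^2 = l3 * (u2 \<bullet> ((A ** A) *v u3))^2"
        using g_ids[OF hA hB hR hBR on ev l(4) False] by auto
      obtain s where s: "s \<in> {1, -1}"
        and sc: "s * sqrt l3 * (u2 \<bullet> ((A ** A) *v u3)) = - (u2 \<bullet> ((A ** A) *v u1))"
        by (rule choose_s[OF ids(2)]) (use l in simp)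
      show ?thesis using star_from_data(1)[OF hA hB on ev l(4) _ ids(1) s sc] l by auto
    qed
  qed
  have part2: "(\<exists>e. star_cond A B e) \<longrightarrow> rank_one_connected A B"
    using star_to_rank1[OF hA] unfolding star_cond_def by blast
  note part3 = part3_lemma[OF hA hB hR hBR]
  show ?thesis using part1 part2 part3 by (intro conjI impI) blast+
qed

end
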